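(* Let $\alpha\in(0,1]$ and $T\in\mathcal{B}_1(\mathbb{D})$. If there exists a Hermitian holomorphic line bundle $\mathcal{E}$ over $\mathbb{D}$ such that $\mathcal{E}_T$ is unitarily equivalent to $\mathcal{E}_{D_\alpha^*}\otimes\mathcal{E}$, then $T$ is similar to $D_\alpha^*$ if and only if $\mathcal{E}_{D_\alpha^*}\otimes\mathcal{E}$ is similar to $\mathcal{E}_{D_\alpha^*}$.
   Context: $\mathcal{B}_1(\mathbb{D})$ is the rank-one Cowen–Douglas class on the unit disk $\mathbb{D}$, with eigenvector line bundle $\mathcal{E}_T$ of fibres $\ker(T-w)$. $\mathcal{D}_\alpha$ is the weighted Dirichlet space of holomorphic $f=\sum\hat f(n)z^n$ with $\|f\|^2=\sum(n+1)^\alpha|\hat f(n)|^2$, $D_\alpha^*$ the adjoint of multiplication by $z$, and $\mathcal{E}_{D_\alpha^*}$ its eigenvector bundle. Tensor product of bundles has fibres $\mathcal{E}_1(w)\otimes\mathcal{E}_2(w)$. Unitary equivalence (resp. similarity) of bundles $\mathcal{E},\mathcal{F}$ means a unitary (resp. bounded invertible) operator $X$ between the closed spans of their fibres with $X(\mathcal{F}(w))=\mathcal{E}(w)$ for all $w$. *)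

theory Defs
  imports "HOL-Analysis.Analysis"
begin

text \<open>All Hilbert spaces are realised as weighted l2 spaces over a countable index type:
  vectors are functions i => complex, inner product sum of beta(i) f(i) conj(g(i)).\<close>

definition wl2 :: "('i \<Rightarrow> real) \<Rightarrow> ('i \<Rightarrow> complex) set" where
  "wl2 \<beta> = {f. (\<lambda>i. \<beta> i * (cmod (f i))\<^sup>2) summable_on UNIV}"

definition winner :: "('i \<Rightarrow> real) \<Rightarrow> ('i \<Rightarrow> complex) \<Rightarrow> ('i \<Rightarrow> complex) \<Rightarrow> complex" where
  "winner \<beta> f g = (\<Sum>\<^sub>\<infinity>i. complex_of_real (\<beta> i) * f i * cnj (g i))"

definition wnorm :: "('i \<Rightarrow> real) \<Rightarrow> ('i \<Rightarrow> complex) \<Rightarrow> real" where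
  "wnorm \<beta> f = sqrt (\<Sum>\<^sub>\<infinity>i. \<beta> i * (cmod (f i))\<^sup>2)"

definition ones :: "'i \<Rightarrow> real" where
  "ones = (\<lambda>_. 1)"

definition cspan :: "('i \<Rightarrow> complex) set \<Rightarrow> ('i \<Rightarrow> complex) set" where
  "cspan S = {x. \<exists>F c. finite F \<and> F \<subseteq> S \<and> x = (\<lambda>i. \<Sum>v\<in>F. c v * v i)}"

definition closed_span :: "('i \<Rightarrow> real) \<Rightarrow> ('i \<Rightarrow> complex) set \<Rightarrow> ('i \<Rightarrow> complex) set" where
  "closed_span \<beta> S = {x \<in> wl2 \<beta>. \<forall>e>0. \<exists>y\<in>cspan S. wnorm \<beta> (\<lambda>i. x i - y i) < e}"

definition clinear_on :: "('i \<Rightarrow> complex) set \<Rightarrow> (('i \<Rightarrow> complex) \<Rightarrow> ('j \<Rightarrow> complex)) \<Rightarrow> bool" where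
  "clinear_on M X \<longleftrightarrow> (\<forall>x\<in>M. \<forall>y\<in>M. \<forall>a b. X (\<lambda>i. a * x i + b * y i) = (\<lambda>j. a * X x j + b * X y j))"

definition bounded_op_between ::
  "('i \<Rightarrow> real) \<Rightarrow> ('i \<Rightarrow> complex) set \<Rightarrow> ('j \<Rightarrow> real) \<Rightarrow> ('j \<Rightarrow> complex) set
    \<Rightarrow> (('i \<Rightarrow> complex) \<Rightarrow> ('j \<Rightarrow> complex)) \<Rightarrow> bool" where
  "bounded_op_between \<beta>1 M \<beta>2 N X \<longleftrightarrow>
     clinear_on M X \<and> X ` M \<subseteq> N \<and> (\<exists>C. \<forall>x\<in>M. wnorm \<beta>2 (X x) \<le> C * wnorm \<beta>1 x)"

definition invertible_op_between ::
  "('i \<Rightarrow> real) \<Rightarrow> ('i \<Rightarrow> complex) set \<Rightarrow> ('j \<Rightarrow> real) \<Rightarrow> ('j \<Rightarrow> complex) set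
    \<Rightarrow> (('i \<Rightarrow> complex) \<Rightarrow> ('j \<Rightarrow> complex)) \<Rightarrow> bool" where
  "invertible_op_between \<beta>1 M \<beta>2 N X \<longleftrightarrow>
     bounded_op_between \<beta>1 M \<beta>2 N X \<and> bij_betw X M N \<and>
     (\<exists>C. \<forall>x\<in>M. wnorm \<beta>1 x \<le> C * wnorm \<beta>2 (X x))"

definition unitary_between ::
  "('i \<Rightarrow> real) \<Rightarrow> ('i \<Rightarrow> complex) set \<Rightarrow> ('j \<Rightarrow> real) \<Rightarrow> ('j \<Rightarrow> complex) set
    \<Rightarrow> (('i \<Rightarrow> complex) \<Rightarrow> ('j \<Rightarrow> complex)) \<Rightarrow> bool" where
  "unitary_between \<beta>1 M \<beta>2 N X \<longleftrightarrow>
     clinear_on M X \<and> bij_betw X M N \<and> (\<forall>x\<in>M. \<forall>y\<in>M. winner \<beta>2 (X x) (X y) = winner \<beta>1 x y)"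

definition bounded_operator :: "('i \<Rightarrow> real) \<Rightarrow> (('i \<Rightarrow> complex) \<Rightarrow> ('i \<Rightarrow> complex)) \<Rightarrow> bool" where
  "bounded_operator \<beta> T \<longleftrightarrow> bounded_op_between \<beta> (wl2 \<beta>) \<beta> (wl2 \<beta>) T"

definition op_similar ::
  "('i \<Rightarrow> real) \<Rightarrow> (('i \<Rightarrow> complex) \<Rightarrow> ('i \<Rightarrow> complex))
    \<Rightarrow> ('j \<Rightarrow> real) \<Rightarrow> (('j \<Rightarrow> complex) \<Rightarrow> ('j \<Rightarrow> complex)) \<Rightarrow> bool" where
  "op_similar \<beta>1 T \<beta>2 S \<longleftrightarrow>
     (\<exists>X. invertible_op_between \<beta>2 (wl2 \<beta>2) \<beta>1 (wl2 \<beta>1) X \<and> (\<forall>x\<in>wl2 \<beta>2. X (S x) = T (X x)))"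

definition bundle_span :: "('i \<Rightarrow> real) \<Rightarrow> (complex \<Rightarrow> ('i \<Rightarrow> complex) set) \<Rightarrow> ('i \<Rightarrow> complex) set" where
  "bundle_span \<beta> E = closed_span \<beta> (\<Union>w\<in>ball 0 1. E w)"

definition eig_bundle :: "('i \<Rightarrow> real) \<Rightarrow> (('i \<Rightarrow> complex) \<Rightarrow> ('i \<Rightarrow> complex)) \<Rightarrow> complex \<Rightarrow> ('i \<Rightarrow> complex) set" where
  "eig_bundle \<beta> T w = {x \<in> wl2 \<beta>. T x = (\<lambda>i. w * x i)}"

definition bundle_unitary_equiv ::
  "('i \<Rightarrow> real) \<Rightarrow> (complex \<Rightarrow> ('i \<Rightarrow> complex) set) \<Rightarrow> ('j \<Rightarrow> real) \<Rightarrow> (complex \<Rightarrow> ('j \<Rightarrow> complex) set) \<Rightarrow> bool" where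
  "bundle_unitary_equiv \<beta>E E \<beta>F F \<longleftrightarrow>
     (\<exists>X. unitary_between \<beta>F (bundle_span \<beta>F F) \<beta>E (bundle_span \<beta>E E) X \<and> (\<forall>w\<in>ball 0 1. X ` F w = E w))"

definition bundle_similar ::
  "('i \<Rightarrow> real) \<Rightarrow> (complex \<Rightarrow> ('i \<Rightarrow> complex) set) \<Rightarrow> ('j \<Rightarrow> real) \<Rightarrow> (complex \<Rightarrow> ('j \<Rightarrow> complex) set) \<Rightarrow> bool" where
  "bundle_similar \<beta>E E \<beta>F F \<longleftrightarrow>
     (\<exists>X. invertible_op_between \<beta>F (bundle_span \<beta>F F) \<beta>E (bundle_span \<beta>E E) X \<and> (\<forall>w\<in>ball 0 1. X ` F w = E w))"

definition cowen_douglas_1 :: "('i \<Rightarrow> real) \<Rightarrow> (('i \<Rightarrow> complex) \<Rightarrow> ('i \<Rightarrow> complex)) \<Rightarrow> bool" where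
  "cowen_douglas_1 \<beta> T \<longleftrightarrow>
     bounded_operator \<beta> T \<and>
     (\<forall>w\<in>ball 0 1.
        (\<forall>y\<in>wl2 \<beta>. \<exists>x\<in>wl2 \<beta>. (\<lambda>i. T x i - w * x i) = y) \<and>
        (\<exists>e. e \<noteq> (\<lambda>_. 0) \<and> eig_bundle \<beta> T w = cspan {e})) \<and>
     bundle_span \<beta> (eig_bundle \<beta> T) = wl2 \<beta>"

definition dir_weight :: "real \<Rightarrow> nat \<Rightarrow> real" where
  "dir_weight \<alpha> n = (real n + 1) powr \<alpha>"

text \<open>Multiplication by z on Taylor coefficients.\<close>
definition shift_z :: "(nat \<Rightarrow> complex) \<Rightarrow> (nat \<Rightarrow> complex)" where
  "shift_z f = (\<lambda>n. if n = 0 then 0 else f (n - 1))"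

text \<open>The adjoint of M_z on D_alpha (set to 0 outside the space for uniqueness).\<close>
definition Dstar :: "real \<Rightarrow> (nat \<Rightarrow> complex) \<Rightarrow> (nat \<Rightarrow> complex)" where
  "Dstar \<alpha> = (THE A. (\<forall>g\<in>wl2 (dir_weight \<alpha>). A g \<in> wl2 (dir_weight \<alpha>)) \<and>
      (\<forall>f\<in>wl2 (dir_weight \<alpha>). \<forall>g\<in>wl2 (dir_weight \<alpha>).
          winner (dir_weight \<alpha>) (shift_z f) g = winner (dir_weight \<alpha>) f (A g)) \<and>
      (\<forall>g. g \<notin> wl2 (dir_weight \<alpha>) \<longrightarrow> A g = (\<lambda>_. 0)))"

text \<open>A holomorphic nonvanishing frame gamma of a line bundle realised in wl2 beta
  (Hermitian metric induced by the inner product).\<close>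
definition hol_frame :: "('i \<Rightarrow> real) \<Rightarrow> (complex \<Rightarrow> ('i \<Rightarrow> complex)) \<Rightarrow> bool" where
  "hol_frame \<beta> \<gamma> \<longleftrightarrow>
     (\<forall>w\<in>ball 0 1. \<gamma> w \<in> wl2 \<beta> \<and> \<gamma> w \<noteq> (\<lambda>_. 0) \<and>
        (\<exists>g\<in>wl2 \<beta>. ((\<lambda>h. wnorm \<beta> (\<lambda>i. (\<gamma> (w + h) i - \<gamma> w i) / h - g i)) \<longlongrightarrow> 0) (at 0)))"

definition line_bundle_of :: "(complex \<Rightarrow> ('i \<Rightarrow> complex)) \<Rightarrow> complex \<Rightarrow> ('i \<Rightarrow> complex) set" where
  "line_bundle_of \<gamma> w = cspan {\<gamma> w}"

text \<open>Hilbert tensor product wl2 b1 (x) wl2 b2 = wl2 (b1 (x) b2) on the product index set.\<close>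
definition tens :: "('i \<Rightarrow> complex) \<Rightarrow> ('j \<Rightarrow> complex) \<Rightarrow> ('i \<times> 'j \<Rightarrow> complex)" where
  "tens x y = (\<lambda>(i, j). x i * y j)"

definition tensor_weight :: "('i \<Rightarrow> real) \<Rightarrow> ('j \<Rightarrow> real) \<Rightarrow> ('i \<times> 'j \<Rightarrow> real)" where
  "tensor_weight \<beta>1 \<beta>2 = (\<lambda>(i, j). \<beta>1 i * \<beta>2 j)"

definition tensor_bundle ::
  "(complex \<Rightarrow> ('i \<Rightarrow> complex) set) \<Rightarrow> (complex \<Rightarrow> ('j \<Rightarrow> complex) set) \<Rightarrow> complex \<Rightarrow> ('i \<times> 'j \<Rightarrow> complex) set" where
  "tensor_bundle E F w = cspan {tens x y | x y. x \<in> E w \<and> y \<in> F w}"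

end

theory Submission
  imports Defs
begin

lemma normsq_add_le: "(cmod (u + v))\<^sup>2 \<le> 2 * (cmod u)\<^sup>2 + 2 * (cmod v)\<^sup>2"
proof -
  have "cmod (u+v) \<le> cmod u + cmod v" by (rule norm_triangle_ineq)
  hence "(cmod (u+v))\<^sup>2 \<le> (cmod u + cmod v)\<^sup>2" by (simp add: power_mono)
  also have "\<dots> \<le> 2 * (cmod u)\<^sup>2 + 2 * (cmod v)\<^sup>2"
    by (smt (verit) sum_squares_bound power2_sum)
  finally show ?thesis .
qed

lemma wl2_lin:
  assumes b: "\<And>i. 0 \<le> \<beta> i" and x: "x \<in> wl2 \<beta>" and y: "y \<in> wl2 \<beta>"
  shows "(\<lambda>i. a * x i + b * y i) \<in> wl2 \<beta>"
proof -
  have sx: "(\<lambda>i. \<beta> i * (cmod (x i))\<^sup>2) summable_on UNIV" using x by (simp add: wl2_def)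
  have sy: "(\<lambda>i. \<beta> i * (cmod (y i))\<^sup>2) summable_on UNIV" using y by (simp add: wl2_def)
  have s: "(\<lambda>i. 2 * (cmod a)\<^sup>2 * (\<beta> i * (cmod (x i))\<^sup>2) + 2 * (cmod b)\<^sup>2 * (\<beta> i * (cmod (y i))\<^sup>2)) summable_on UNIV"
    by (intro summable_on_add summable_on_cmult_right sx sy)
  show ?thesis unfolding wl2_def mem_Collect_eq
  proof (rule summable_on_comparison_test[OF s])
    fix i
    have "(cmod (a * x i + b * y i))\<^sup>2 \<le> 2 * (cmod (a * x i))\<^sup>2 + 2 * (cmod (b * y i))\<^sup>2"
      by (rule normsq_add_le)
    hence "\<beta> i * (cmod (a * x i + b * y i))\<^sup>2 \<le> \<beta> i * (2 * (cmod (a * x i))\<^sup>2 + 2 * (cmod (b * y i))\<^sup>2)"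
      using b by (simp add: mult_left_mono)
    thus "\<beta> i * (cmod (a * x i + b * y i))\<^sup>2 \<le> 2 * (cmod a)\<^sup>2 * (\<beta> i * (cmod (x i))\<^sup>2) + 2 * (cmod b)\<^sup>2 * (\<beta> i * (cmod (y i))\<^sup>2)"
      by (simp add: norm_mult power_mult_distrib algebra_simps)
    show "0 \<le> \<beta> i * (cmod (a * x i + b * y i))\<^sup>2" using b by simp
  qed
qed

lemma wl2_zero: "(\<lambda>_. 0) \<in> wl2 \<beta>"
  by (simp add: wl2_def)

lemma wl2_add: "(\<And>i. 0 \<le> \<beta> i) \<Longrightarrow> x \<in> wl2 \<beta> \<Longrightarrow> y \<in> wl2 \<beta> \<Longrightarrow> (\<lambda>i. x i + y i) \<in> wl2 \<beta>"
  using wl2_lin[of \<beta> x y 1 1] by simp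
lemma wl2_diff: "(\<And>i. 0 \<le> \<beta> i) \<Longrightarrow> x \<in> wl2 \<beta> \<Longrightarrow> y \<in> wl2 \<beta> \<Longrightarrow> (\<lambda>i. x i - y i) \<in> wl2 \<beta>"
  using wl2_lin[of \<beta> x y 1 "-1"] by simp
lemma wl2_scale: "(\<And>i. 0 \<le> \<beta> i) \<Longrightarrow> x \<in> wl2 \<beta> \<Longrightarrow> (\<lambda>i. a * x i) \<in> wl2 \<beta>"
  using wl2_lin[of \<beta> x x a 0] by simp

lemma wnorm_nonneg: "(\<And>i. 0 \<le> \<beta> i) \<Longrightarrow> 0 \<le> wnorm \<beta> x"
  unfolding wnorm_def by (intro real_sqrt_ge_zero infsum_nonneg) auto

lemma wnorm_scale: "wnorm \<beta> (\<lambda>i. c * x i) = cmod c * wnorm \<beta> x"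
proof -
  have "(\<Sum>\<^sub>\<infinity>i. \<beta> i * (cmod (c * x i))\<^sup>2) = (\<Sum>\<^sub>\<infinity>i. (cmod c)\<^sup>2 * (\<beta> i * (cmod (x i))\<^sup>2))"
    by (simp add: norm_mult power_mult_distrib algebra_simps)
  also have "\<dots> = (cmod c)\<^sup>2 * (\<Sum>\<^sub>\<infinity>i. \<beta> i * (cmod (x i))\<^sup>2)"
    by (rule infsum_cmult_right')
  finally show ?thesis unfolding wnorm_def by (simp add: real_sqrt_mult)
qed

lemma wnorm_zero[simp]: "wnorm \<beta> (\<lambda>_. 0) = 0"
  by (simp add: wnorm_def)

lemma wnorm_minus_commute: "wnorm \<beta> (\<lambda>i. x i - y i) = wnorm \<beta> (\<lambda>i. y i - x i)"
  unfolding wnorm_def by (simp add: norm_minus_commute)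

lemma wnorm_triangle:
  assumes b: "\<And>i. 0 \<le> \<beta> i" and x: "x \<in> wl2 \<beta>" and y: "y \<in> wl2 \<beta>"
  shows "wnorm \<beta> (\<lambda>i. x i + y i) \<le> wnorm \<beta> x + wnorm \<beta> y"
proof -
  define fx where "fx = (\<lambda>i. \<beta> i * (cmod (x i))\<^sup>2)"
  define fy where "fy = (\<lambda>i. \<beta> i * (cmod (y i))\<^sup>2)"
  define fs where "fs = (\<lambda>i. \<beta> i * (cmod (x i + y i))\<^sup>2)"
  have sx: "fx summable_on UNIV" using x by (simp add: wl2_def fx_def)
  have sy: "fy summable_on UNIV" using y by (simp add: wl2_def fy_def)
  have ss: "fs summable_on UNIV" using wl2_add[OF b x y] by (simp add: wl2_def fs_def)
  define A where "A = infsum fx UNIV"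
  define B where "B = infsum fy UNIV"
  have A0: "A \<ge> 0" unfolding A_def fx_def by (intro infsum_nonneg) (simp add: b)
  have B0: "B \<ge> 0" unfolding B_def fy_def by (intro infsum_nonneg) (simp add: b)
  have wx: "wnorm \<beta> x = sqrt A" by (simp add: wnorm_def A_def fx_def)
  have wy: "wnorm \<beta> y = sqrt B" by (simp add: wnorm_def B_def fy_def)
  have ws: "wnorm \<beta> (\<lambda>i. x i + y i) = sqrt (infsum fs UNIV)" by (simp add: wnorm_def fs_def)
  show ?thesis
  proof (cases "A = 0")
    case True
    have "\<And>i. fx i = 0"
      using nonneg_infsum_le_0D[OF _ sx] True b unfolding A_def fx_def by simp
    have "fs i = fy i" for i
    proof -
      have "\<beta> i = 0 \<or> x i = 0" using \<open>\<And>i. fx i = 0\<close>[of i] unfolding fx_def by simp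
      thus ?thesis unfolding fs_def fy_def by auto
    qed
    hence "infsum fs UNIV = B" unfolding B_def by (metis ext)
    thus ?thesis using wx wy ws True by simp
  next
    case An: False
    show ?thesis
    proof (cases "B = 0")
      case True
      have "\<And>i. fy i = 0"
        using nonneg_infsum_le_0D[OF _ sy] True b unfolding B_def fy_def by simp
      have "fs i = fx i" for i
      proof -
        have "\<beta> i = 0 \<or> y i = 0" using \<open>\<And>i. fy i = 0\<close>[of i] unfolding fy_def by simp
        thus ?thesis unfolding fs_def fx_def by auto
      qed
      hence "infsum fs UNIV = A" unfolding A_def by (metis ext)
      thus ?thesis using wx wy ws True by simp
    next
      case Bn: False
      define a where "a = sqrt A"
      define c where "c = sqrt B"
      have a0: "a > 0" using A0 An by (simp add: a_def)
      have c0: "c > 0" using B0 Bn by (simp add: c_def)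
      have aa: "a^2 = A" using A0 by (simp add: a_def)
      have cc: "c^2 = B" using B0 by (simp add: c_def)
      have pt: "fs i \<le> (1 + c/a) * fx i + (1 + a/c) * fy i" for i
      proof -
        define u where "u = cmod (x i)"
        define v where "v = cmod (y i)"
        have "cmod (x i + y i) \<le> u + v" unfolding u_def v_def by (rule norm_triangle_ineq)
        hence "(cmod (x i + y i))\<^sup>2 \<le> (u + v)\<^sup>2" by (simp add: power_mono)
        also have "\<dots> \<le> (1 + c/a) * u\<^sup>2 + (1 + a/c) * v\<^sup>2"
        proof -
          have "0 \<le> (c * u - a * v)\<^sup>2" by simp
          hence h1: "2 * u * v * (a * c) \<le> (c * u)\<^sup>2 + (a * v)\<^sup>2"
            by (simp add: power2_diff power_mult_distrib algebra_simps)
          have h2: "(c/a * u^2 + a/c * v^2) * (a * c) = (c * u)\<^sup>2 + (a * v)\<^sup>2"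
            using a0 c0 by (simp add: field_simps power2_eq_square)
          have "(2 * u * v) * (a * c) \<le> (c/a * u^2 + a/c * v^2) * (a * c)" using h1 h2 by simp
          hence "2 * u * v \<le> c/a * u^2 + a/c * v^2" using a0 c0
            by (meson mult_pos_pos mult_right_le_imp_le)
          thus ?thesis by (simp add: power2_sum algebra_simps)
        qed
        finally have "(cmod (x i + y i))\<^sup>2 \<le> (1 + c/a) * u\<^sup>2 + (1 + a/c) * v\<^sup>2" .
        hence "\<beta> i * (cmod (x i + y i))\<^sup>2 \<le> \<beta> i * ((1 + c/a) * u\<^sup>2 + (1 + a/c) * v\<^sup>2)"
          using b by (simp add: mult_left_mono)
        thus ?thesis unfolding fs_def fx_def fy_def u_def v_def by (simp add: algebra_simps)
      qed
      have "infsum fs UNIV \<le> infsum (\<lambda>i. (1 + c/a) * fx i + (1 + a/c) * fy i) UNIV"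
        by (intro infsum_mono ss summable_on_add summable_on_cmult_right sx sy pt)
      also have "\<dots> = (1 + c/a) * A + (1 + a/c) * B"
        by (simp add: infsum_add summable_on_cmult_right sx sy infsum_cmult_right' A_def B_def)
      also have "\<dots> = (a + c)^2" using a0 c0 aa[symmetric] cc[symmetric]
        by (simp add: field_simps power2_eq_square)
      finally have "sqrt (infsum fs UNIV) \<le> sqrt ((a + c)\<^sup>2)"
        by (rule real_sqrt_le_mono)
      hence "sqrt (infsum fs UNIV) \<le> a + c" using a0 c0 by simp
      thus ?thesis using ws wx wy a_def c_def by simp
    qed
  qed
qed

lemma wnorm_triangle_diff:
  assumes b: "\<And>i. 0 \<le> \<beta> i" and "x \<in> wl2 \<beta>" "y \<in> wl2 \<beta>" "z \<in> wl2 \<beta>"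
  shows "wnorm \<beta> (\<lambda>i. x i - z i) \<le> wnorm \<beta> (\<lambda>i. x i - y i) + wnorm \<beta> (\<lambda>i. y i - z i)"
  using wnorm_triangle[OF b wl2_diff[OF b assms(2,3)] wl2_diff[OF b assms(3,4)]] by simp

lemma wnorm_eq0:
  assumes b: "\<And>i. 0 < \<beta> i" and x: "x \<in> wl2 \<beta>" and w: "wnorm \<beta> x = 0"
  shows "x = (\<lambda>_. 0)"
proof
  fix i
  have sx: "(\<lambda>i. \<beta> i * (cmod (x i))\<^sup>2) summable_on UNIV" using x by (simp add: wl2_def)
  have nn: "\<And>j. j \<in> UNIV \<Longrightarrow> 0 \<le> \<beta> j * (cmod (x j))\<^sup>2"
    using b by (simp add: less_imp_le)
  have "sqrt (\<Sum>\<^sub>\<infinity>i. \<beta> i * (cmod (x i))\<^sup>2) = 0"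
    using w unfolding wnorm_def .
  hence le: "(\<Sum>\<^sub>\<infinity>i. \<beta> i * (cmod (x i))\<^sup>2) \<le> 0" by simp
  have "\<beta> i * (cmod (x i))\<^sup>2 = 0"
    using nonneg_infsum_le_0D[OF le sx nn UNIV_I] .
  moreover have "\<beta> i \<noteq> 0" using b[of i] by simp
  ultimately show "x i = 0" by simp
qed

lemma cspan_base: "v \<in> S \<Longrightarrow> v \<in> cspan S"
  unfolding cspan_def by (rule CollectI, rule exI[of _ "{v}"], rule exI[of _ "\<lambda>_. 1"]) auto

lemma cspan_zero: "(\<lambda>_. 0) \<in> cspan S"
  unfolding cspan_def by (rule CollectI, rule exI[of _ "{}"]) auto

lemma cspan_sub:
  assumes z: "(\<lambda>_. 0) \<in> V"
    and l: "\<And>x y a b. x \<in> V \<Longrightarrow> y \<in> V \<Longrightarrow> (\<lambda>i. a * x i + b * y i) \<in> V"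
    and S: "S \<subseteq> V"
  shows "cspan S \<subseteq> V"
proof
  fix x assume "x \<in> cspan S"
  then obtain F c where F: "finite F" "F \<subseteq> S" and x: "x = (\<lambda>i. \<Sum>v\<in>F. c v * v i)"
    unfolding cspan_def by blast
  have "F \<subseteq> S \<Longrightarrow> (\<lambda>i. \<Sum>v\<in>F. c v * v i) \<in> V" using F(1)
  proof (induction F rule: finite_induct)
    case empty then show ?case using z by simp
  next
    case (insert w F)
    have "(\<lambda>i. c w * w i + 1 * (\<Sum>v\<in>F. c v * v i)) \<in> V"
      using l[of w "\<lambda>i. \<Sum>v\<in>F. c v * v i" "c w" 1] insert S by auto
    thus ?case using insert by simp
  qed
  thus "x \<in> V" using F x by simp
qed

lemma cspan_lin:
  assumes x: "x \<in> cspan S" and y: "y \<in> cspan S"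
  shows "(\<lambda>i. a * x i + b * y i) \<in> cspan S"
proof -
  obtain F1 c1 where F1: "finite F1" "F1 \<subseteq> S" and x: "x = (\<lambda>i. \<Sum>v\<in>F1. c1 v * v i)"
    using x unfolding cspan_def by blast
  obtain F2 c2 where F2: "finite F2" "F2 \<subseteq> S" and y: "y = (\<lambda>i. \<Sum>v\<in>F2. c2 v * v i)"
    using y unfolding cspan_def by blast
  define c where "c = (\<lambda>v. a * (if v \<in> F1 then c1 v else 0) + b * (if v \<in> F2 then c2 v else 0))"
  have "(\<lambda>i. a * x i + b * y i) = (\<lambda>i. \<Sum>v\<in>F1 \<union> F2. c v * v i)"
  proof
    fix i
    have e1: "(\<Sum>v\<in>F1 \<union> F2. (if v \<in> F1 then c1 v * v i else 0)) = (\<Sum>v\<in>F1. c1 v * v i)"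
      using F1 F2 by (subst sum.inter_restrict[symmetric]) (auto intro: sum.cong simp: Int_absorb1)
    have e2: "(\<Sum>v\<in>F1 \<union> F2. (if v \<in> F2 then c2 v * v i else 0)) = (\<Sum>v\<in>F2. c2 v * v i)"
      using F1 F2 by (subst sum.inter_restrict[symmetric]) (auto intro: sum.cong simp: Int_absorb1)
    have "(\<Sum>v\<in>F1 \<union> F2. c v * v i) = (\<Sum>v\<in>F1 \<union> F2. a * (if v \<in> F1 then c1 v * v i else 0)
          + b * (if v \<in> F2 then c2 v * v i else 0))"
      by (rule sum.cong) (auto simp: c_def algebra_simps)
    also have "\<dots> = a * (\<Sum>v\<in>F1 \<union> F2. (if v \<in> F1 then c1 v * v i else 0))
          + b * (\<Sum>v\<in>F1 \<union> F2. (if v \<in> F2 then c2 v * v i else 0))"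
      by (simp add: sum.distrib sum_distrib_left)
    finally have "(\<Sum>v\<in>F1 \<union> F2. c v * v i) = a * (\<Sum>v\<in>F1 \<union> F2. (if v \<in> F1 then c1 v * v i else 0))
          + b * (\<Sum>v\<in>F1 \<union> F2. (if v \<in> F2 then c2 v * v i else 0))" .
    thus "a * x i + b * y i = (\<Sum>v\<in>F1 \<union> F2. c v * v i)" using e1 e2 x y by simp
  qed
  thus ?thesis unfolding cspan_def using F1 F2 by blast
qed

lemma cspan_wl2: "(\<And>i. 0 \<le> \<beta> i) \<Longrightarrow> S \<subseteq> wl2 \<beta> \<Longrightarrow> cspan S \<subseteq> wl2 \<beta>"
  by (rule cspan_sub) (auto intro: wl2_zero wl2_lin)

lemma cs_wl2: "closed_span \<beta> S \<subseteq> wl2 \<beta>"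
  unfolding closed_span_def by auto

lemma cspan_cs: "(\<And>i. 0 \<le> \<beta> i) \<Longrightarrow> S \<subseteq> wl2 \<beta> \<Longrightarrow> cspan S \<subseteq> closed_span \<beta> S"
proof
  fix x assume b: "\<And>i. 0 \<le> \<beta> i" and S: "S \<subseteq> wl2 \<beta>" and x: "x \<in> cspan S"
  have "x \<in> wl2 \<beta>" using cspan_wl2[OF b S] x by auto
  moreover have "wnorm \<beta> (\<lambda>i. x i - x i) = 0" by simp
  ultimately show "x \<in> closed_span \<beta> S" unfolding closed_span_def using x by force
qed

lemma cs_closed:
  assumes b: "\<And>i. 0 \<le> \<beta> i" and S: "S \<subseteq> wl2 \<beta>" and x: "x \<in> wl2 \<beta>"
    and ap: "\<And>e. e > 0 \<Longrightarrow> \<exists>y\<in>closed_span \<beta> S. wnorm \<beta> (\<lambda>i. x i - y i) < e"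
  shows "x \<in> closed_span \<beta> S"
  unfolding closed_span_def
proof (intro CollectI conjI x allI impI)
  fix e :: real assume e: "e > 0"
  obtain y where y: "y \<in> closed_span \<beta> S" and xy: "wnorm \<beta> (\<lambda>i. x i - y i) < e/2"
    using ap[of "e/2"] e by auto
  obtain z where z: "z \<in> cspan S" and yz: "wnorm \<beta> (\<lambda>i. y i - z i) < e/2"
    using y e unfolding closed_span_def by (auto dest!: spec[of _ "e/2"])
  have "wnorm \<beta> (\<lambda>i. x i - z i) \<le> wnorm \<beta> (\<lambda>i. x i - y i) + wnorm \<beta> (\<lambda>i. y i - z i)"
    by (rule wnorm_triangle_diff[OF b x]) (use y z cspan_wl2[OF b S] cs_wl2 in auto)
  thus "\<exists>y\<in>cspan S. wnorm \<beta> (\<lambda>i. x i - y i) < e" using xy yz z by force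
qed

lemma cs_lin:
  assumes b: "\<And>i. 0 \<le> \<beta> i" and S: "S \<subseteq> wl2 \<beta>"
    and x: "x \<in> closed_span \<beta> S" and y: "y \<in> closed_span \<beta> S"
  shows "(\<lambda>i. a * x i + b * y i) \<in> closed_span \<beta> S"
  unfolding closed_span_def
proof (intro CollectI conjI allI impI)
  have xw: "x \<in> wl2 \<beta>" and yw: "y \<in> wl2 \<beta>" using x y cs_wl2 by auto
  show "(\<lambda>i. a * x i + b * y i) \<in> wl2 \<beta>" by (rule wl2_lin[OF b xw yw])
  fix e :: real assume e: "e > 0"
  define d where "d = e / (2 * (cmod a + cmod b + 1))"
  have d: "d > 0" using e by (simp add: d_def add_nonneg_pos)
  obtain x' where x': "x' \<in> cspan S" and xx: "wnorm \<beta> (\<lambda>i. x i - x' i) < d"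
    using x d unfolding closed_span_def by (auto dest!: spec[of _ d])
  obtain y' where y': "y' \<in> cspan S" and yy: "wnorm \<beta> (\<lambda>i. y i - y' i) < d"
    using y d unfolding closed_span_def by (auto dest!: spec[of _ d])
  have x'w: "x' \<in> wl2 \<beta>" and y'w: "y' \<in> wl2 \<beta>" using x' y' cspan_wl2[OF b S] by auto
  have eq: "(\<lambda>i. (a * x i + b * y i) - (a * x' i + b * y' i)) = (\<lambda>i. a * (x i - x' i) + b * (y i - y' i))"
    by (simp add: algebra_simps)
  have "wnorm \<beta> (\<lambda>i. a * (x i - x' i) + b * (y i - y' i))
        \<le> wnorm \<beta> (\<lambda>i. a * (x i - x' i)) + wnorm \<beta> (\<lambda>i. b * (y i - y' i))"
    by (rule wnorm_triangle[OF b]) (intro wl2_scale wl2_diff b xw yw x'w y'w)+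
  also have "\<dots> = cmod a * wnorm \<beta> (\<lambda>i. x i - x' i) + cmod b * wnorm \<beta> (\<lambda>i. y i - y' i)"
    by (simp add: wnorm_scale)
  also have "\<dots> \<le> cmod a * d + cmod b * d"
    using xx yy by (intro add_mono mult_left_mono) auto
  also have "\<dots> < e"
  proof -
    have p: "cmod a + cmod b + 1 > 0" by (simp add: add_nonneg_pos)
    have "cmod a * d + cmod b * d \<le> (cmod a + cmod b + 1) * d" using d by (simp add: algebra_simps)
    also have "(cmod a + cmod b + 1) * d = e / 2" using p unfolding d_def
      by (simp add: field_simps)
    finally show ?thesis using e by simp
  qed
  finally have "wnorm \<beta> (\<lambda>i. (a * x i + b * y i) - (a * x' i + b * y' i)) < e" using eq by simp
  moreover have "(\<lambda>i. a * x' i + b * y' i) \<in> cspan S" by (rule cspan_lin[OF x' y'])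
  ultimately show "\<exists>z\<in>cspan S. wnorm \<beta> (\<lambda>i. (a * x i + b * y i) - z i) < e" by force
qed

lemma cs_zero: "(\<And>i. 0 \<le> \<beta> i) \<Longrightarrow> S \<subseteq> wl2 \<beta> \<Longrightarrow> (\<lambda>_. 0) \<in> closed_span \<beta> S"
  using cspan_cs cspan_zero by blast

lemma cs_sum:
  assumes b: "\<And>i. 0 \<le> \<beta> i" and S: "S \<subseteq> wl2 \<beta>" and v: "\<And>k. k < (N::nat) \<Longrightarrow> v k \<in> closed_span \<beta> S"
  shows "(\<lambda>i. \<Sum>k<N. c k * v k i) \<in> closed_span \<beta> S"
  using v
proof (induction N)
  case 0 then show ?case using cs_zero[OF b S] by simp
next
  case (Suc N)
  have "(\<lambda>i. 1 * (\<Sum>k<N. c k * v k i) + c N * v N i) \<in> closed_span \<beta> S"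
    by (rule cs_lin[OF b S]) (use Suc in auto)
  thus ?case by simp
qed

lemma dw_pos: "dir_weight \<alpha> n > 0"
  by (simp add: dir_weight_def)

lemma dw_nonneg: "dir_weight \<alpha> n \<ge> 0"
  using dw_pos less_imp_le by blast

lemma dw_ge1: "\<alpha> \<ge> 0 \<Longrightarrow> dir_weight \<alpha> n \<ge> 1"
  unfolding dir_weight_def by (rule ge_one_powr_ge_zero) auto

lemma dw_ratio: assumes "\<alpha> \<ge> 0"
  shows "dir_weight \<alpha> (Suc m) / dir_weight \<alpha> m \<le> 2 powr \<alpha>"
proof -
  have "dir_weight \<alpha> (Suc m) / dir_weight \<alpha> m = ((real m + 2) / (real m + 1)) powr \<alpha>"
    unfolding dir_weight_def by (simp add: powr_divide add.commute)
  also have "\<dots> \<le> 2 powr \<alpha>"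
    by (rule powr_mono2) (use assms in \<open>auto simp: field_simps\<close>)
  finally show ?thesis .
qed

lemma single_supp:
  fixes h :: "'i \<Rightarrow> 'b::{comm_monoid_add, t2_space}"
  assumes "\<And>n. n \<noteq> k \<Longrightarrow> h n = 0"
  shows "infsum h UNIV = h k" "h summable_on UNIV"
proof -
  have "infsum h UNIV = infsum h {k}" by (rule infsum_cong_neutral) (use assms in auto)
  thus "infsum h UNIV = h k" by simp
  have "h summable_on {k}" by simp
  thus "h summable_on UNIV" by (rule summable_on_cong_neutral[THEN iffD1, rotated -1]) (use assms in auto)
qed

definition delta :: "'i \<Rightarrow> 'i \<Rightarrow> complex" where
  "delta k = (\<lambda>n. if n = k then 1 else 0)"

lemma winner_delta: "winner \<beta> (delta k) g = complex_of_real (\<beta> k) * cnj (g k)"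
  unfolding winner_def delta_def by (subst single_supp(1)[where k=k]) auto

lemma delta_wl2: "delta k \<in> wl2 \<beta>"
  unfolding wl2_def delta_def by (auto intro: single_supp(2)[where k=k])

lemma shift_delta: "shift_z (delta m) = delta (Suc m)"
  unfolding shift_z_def delta_def by (rule ext) (auto split: if_splits)

definition dop :: "real \<Rightarrow> (nat \<Rightarrow> complex) \<Rightarrow> (nat \<Rightarrow> complex)" where
  "dop \<alpha> g = (if g \<in> wl2 (dir_weight \<alpha>)
     then (\<lambda>m. complex_of_real (dir_weight \<alpha> (Suc m) / dir_weight \<alpha> m) * g (Suc m)) else (\<lambda>_. 0))"

lemma shift_sum:
  fixes G :: "nat \<Rightarrow> real"
  assumes G: "G summable_on UNIV" and nn: "\<And>n. G n \<ge> 0"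
  shows "(\<lambda>m. G (Suc m)) summable_on UNIV" "infsum (\<lambda>m. G (Suc m)) UNIV \<le> infsum G UNIV"
proof -
  have s: "G summable_on range Suc" by (rule summable_on_subset_banach[OF G]) auto
  thus "(\<lambda>m. G (Suc m)) summable_on UNIV" using summable_on_reindex[of Suc UNIV G] by (simp add: o_def)
  have "infsum (\<lambda>m. G (Suc m)) UNIV = infsum G (range Suc)"
    using infsum_reindex[of Suc UNIV G] by (simp add: o_def)
  also have "\<dots> \<le> infsum G UNIV" by (rule infsum_mono_neutral[OF s G]) (use nn in auto)
  finally show "infsum (\<lambda>m. G (Suc m)) UNIV \<le> infsum G UNIV" .
qed

lemma dop_wl2:
  assumes a: "\<alpha> \<ge> 0" and g: "g \<in> wl2 (dir_weight \<alpha>)"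
  shows "dop \<alpha> g \<in> wl2 (dir_weight \<alpha>)"
    "wnorm (dir_weight \<alpha>) (dop \<alpha> g) \<le> sqrt (2 powr \<alpha>) * wnorm (dir_weight \<alpha>) g"
proof -
  define \<beta> where "\<beta> = dir_weight \<alpha>"
  define G where "G = (\<lambda>n. \<beta> n * (cmod (g n))\<^sup>2)"
  define r where "r = (\<lambda>m. \<beta> (Suc m) / \<beta> m)"
  have bp: "\<And>n. \<beta> n > 0" by (simp add: \<beta>_def dw_pos)
  have G: "G summable_on UNIV" using g by (simp add: wl2_def G_def \<beta>_def)
  have Gn: "\<And>n. G n \<ge> 0" using bp by (simp add: G_def less_imp_le)
  have r2: "\<And>m. r m \<le> 2 powr \<alpha>" unfolding r_def \<beta>_def by (rule dw_ratio[OF a])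
  have r0: "\<And>m. r m \<ge> 0" using bp by (simp add: r_def less_imp_le)
  have dg: "dop \<alpha> g = (\<lambda>m. complex_of_real (r m) * g (Suc m))"
    using g by (simp add: dop_def r_def \<beta>_def)
  have eq: "\<beta> m * (cmod (dop \<alpha> g m))\<^sup>2 = r m * G (Suc m)" for m
  proof -
    have "\<beta> m * (cmod (dop \<alpha> g m))\<^sup>2 = \<beta> m * (r m)\<^sup>2 * (cmod (g (Suc m)))\<^sup>2"
      using r0[of m] by (simp add: dg norm_mult power_mult_distrib)
    also have "\<beta> m * (r m)\<^sup>2 = r m * \<beta> (Suc m)" using bp[of m]
      by (simp add: r_def power2_eq_square)
    finally show ?thesis by (simp add: G_def)
  qed
  have s1: "(\<lambda>m. G (Suc m)) summable_on UNIV" by (rule shift_sum(1)[OF G Gn])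
  have s2: "(\<lambda>m. 2 powr \<alpha> * G (Suc m)) summable_on UNIV" by (rule summable_on_cmult_right[OF s1])
  have s3: "(\<lambda>m. \<beta> m * (cmod (dop \<alpha> g m))\<^sup>2) summable_on UNIV"
    unfolding eq by (rule summable_on_comparison_test[OF s2]) (use r2 Gn r0 in \<open>auto intro: mult_right_mono\<close>)
  thus "dop \<alpha> g \<in> wl2 (dir_weight \<alpha>)" by (simp add: wl2_def \<beta>_def)
  have "infsum (\<lambda>m. \<beta> m * (cmod (dop \<alpha> g m))\<^sup>2) UNIV \<le> infsum (\<lambda>m. 2 powr \<alpha> * G (Suc m)) UNIV"
    by (rule infsum_mono[OF s3 s2]) (use r2 Gn in \<open>auto simp: eq intro: mult_right_mono\<close>)
  also have "\<dots> = 2 powr \<alpha> * infsum (\<lambda>m. G (Suc m)) UNIV" by (rule infsum_cmult_right')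
  also have "\<dots> \<le> 2 powr \<alpha> * infsum G UNIV" by (rule mult_left_mono[OF shift_sum(2)[OF G Gn]]) simp
  finally have "sqrt (infsum (\<lambda>m. \<beta> m * (cmod (dop \<alpha> g m))\<^sup>2) UNIV) \<le> sqrt (2 powr \<alpha> * infsum G UNIV)"
    by (rule real_sqrt_le_mono)
  thus "wnorm (dir_weight \<alpha>) (dop \<alpha> g) \<le> sqrt (2 powr \<alpha>) * wnorm (dir_weight \<alpha>) g"
    by (simp add: wnorm_def \<beta>_def G_def real_sqrt_mult)
qed

lemma dop_adj:
  assumes g: "g \<in> wl2 (dir_weight \<alpha>)"
  shows "winner (dir_weight \<alpha>) (shift_z f) g = winner (dir_weight \<alpha>) f (dop \<alpha> g)"
proof -
  define \<beta> where "\<beta> = dir_weight \<alpha>"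
  have bp: "\<And>n. \<beta> n > 0" by (simp add: \<beta>_def dw_pos)
  define H where "H = (\<lambda>n. complex_of_real (\<beta> n) * shift_z f n * cnj (g n))"
  have "winner \<beta> (shift_z f) g = infsum H UNIV" by (simp add: winner_def H_def)
  also have "\<dots> = infsum H (range Suc)"
  proof (rule infsum_cong_neutral)
    fix x assume "x \<in> UNIV - range Suc"
    hence "x = 0" by (cases x) auto
    thus "H x = 0" by (simp add: H_def shift_z_def)
  qed auto
  also have "\<dots> = infsum (\<lambda>m. H (Suc m)) UNIV"
    using infsum_reindex[of Suc UNIV H] by (simp add: o_def)
  also have "\<dots> = winner \<beta> f (dop \<alpha> g)"
    unfolding winner_def
  proof (rule infsum_cong)
    fix m
    define r where "r = \<beta> (Suc m) / \<beta> m"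
    have br: "\<beta> m * r = \<beta> (Suc m)" using bp[of m] by (simp add: r_def)
    have d: "dop \<alpha> g m = complex_of_real r * g (Suc m)"
      using g by (simp add: dop_def r_def \<beta>_def)
    have "complex_of_real (\<beta> m) * f m * cnj (dop \<alpha> g m)
        = complex_of_real (\<beta> m * r) * (f m * cnj (g (Suc m)))"
      unfolding d by (simp add: of_real_mult ac_simps)
    also have "\<dots> = H (Suc m)" unfolding br by (simp add: H_def shift_z_def ac_simps)
    finally show "H (Suc m) = complex_of_real (\<beta> m) * f m * cnj (dop \<alpha> g m)" by simp
  qed
  finally show ?thesis by (simp add: \<beta>_def)
qed

lemma Dstar_eq:
  assumes a: "\<alpha> \<ge> 0"
  shows "Dstar \<alpha> = dop \<alpha>"
  unfolding Dstar_def
proof (rule the_equality)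
  show "(\<forall>g\<in>wl2 (dir_weight \<alpha>). dop \<alpha> g \<in> wl2 (dir_weight \<alpha>)) \<and>
    (\<forall>f\<in>wl2 (dir_weight \<alpha>). \<forall>g\<in>wl2 (dir_weight \<alpha>).
        winner (dir_weight \<alpha>) (shift_z f) g = winner (dir_weight \<alpha>) f (dop \<alpha> g)) \<and>
    (\<forall>g. g \<notin> wl2 (dir_weight \<alpha>) \<longrightarrow> dop \<alpha> g = (\<lambda>_. 0))"
  proof (intro conjI ballI allI impI)
    show "\<And>g. g \<in> wl2 (dir_weight \<alpha>) \<Longrightarrow> dop \<alpha> g \<in> wl2 (dir_weight \<alpha>)" by (rule dop_wl2(1)[OF a])
    show "\<And>f g. g \<in> wl2 (dir_weight \<alpha>) \<Longrightarrow>
       winner (dir_weight \<alpha>) (shift_z f) g = winner (dir_weight \<alpha>) f (dop \<alpha> g)" by (rule dop_adj)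
    show "\<And>g. g \<notin> wl2 (dir_weight \<alpha>) \<Longrightarrow> dop \<alpha> g = (\<lambda>_. 0)" by (simp add: dop_def)
  qed
next
  fix A
  assume P: "(\<forall>g\<in>wl2 (dir_weight \<alpha>). A g \<in> wl2 (dir_weight \<alpha>)) \<and>
    (\<forall>f\<in>wl2 (dir_weight \<alpha>). \<forall>g\<in>wl2 (dir_weight \<alpha>).
        winner (dir_weight \<alpha>) (shift_z f) g = winner (dir_weight \<alpha>) f (A g)) \<and>
    (\<forall>g. g \<notin> wl2 (dir_weight \<alpha>) \<longrightarrow> A g = (\<lambda>_. 0))"
  show "A = dop \<alpha>"
  proof
    fix g
    show "A g = dop \<alpha> g"
    proof (cases "g \<in> wl2 (dir_weight \<alpha>)")
      case False
      have "A g = (\<lambda>_. 0)" using P False by (simp only: not_def imp_conjL)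
      thus ?thesis using False by (simp add: dop_def)
    next
      case g: True
      show ?thesis
      proof
        fix m
        define \<beta> where "\<beta> = dir_weight \<alpha>"
        have bp: "\<And>n. \<beta> n > 0" by (simp add: \<beta>_def dw_pos)
        have "winner \<beta> (shift_z (delta m)) g = winner \<beta> (delta m) (A g)"
        proof -
          have P2: "\<forall>f\<in>wl2 (dir_weight \<alpha>). \<forall>g\<in>wl2 (dir_weight \<alpha>).
            winner (dir_weight \<alpha>) (shift_z f) g = winner (dir_weight \<alpha>) f (A g)" using P by blast
          show ?thesis unfolding \<beta>_def by (rule P2[rule_format, OF delta_wl2 g])
        qed
        hence X: "complex_of_real (\<beta> m) * cnj (A g m) = complex_of_real (\<beta> (Suc m)) * cnj (g (Suc m))"
          by (simp add: shift_delta winner_delta)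
        have nz: "complex_of_real (\<beta> m) \<noteq> 0" using bp[of m] by simp
        have "cnj (A g m) = (complex_of_real (\<beta> m) * cnj (A g m)) / complex_of_real (\<beta> m)"
          using nz by simp
        also have "\<dots> = complex_of_real (\<beta> (Suc m)) * cnj (g (Suc m)) / complex_of_real (\<beta> m)"
          unfolding X ..
        also have "\<dots> = complex_of_real (\<beta> (Suc m) / \<beta> m) * cnj (g (Suc m))"
          by (simp add: of_real_divide)
        finally have "cnj (A g m) = complex_of_real (\<beta> (Suc m) / \<beta> m) * cnj (g (Suc m))" .
        hence "cnj (cnj (A g m)) = cnj (complex_of_real (\<beta> (Suc m) / \<beta> m) * cnj (g (Suc m)))"
          by (rule arg_cong)
        hence "A g m = cnj (complex_of_real (\<beta> (Suc m) / \<beta> m) * cnj (g (Suc m)))"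
          by (simp only: complex_cnj_cnj)
        also have "\<dots> = dop \<alpha> g m" using g by (simp add: dop_def \<beta>_def)
        finally show "A g m = dop \<alpha> g m" .
      qed
    qed
  qed
qed

lemma dop_lin:
  assumes a: "\<alpha> \<ge> 0"
  shows "clinear_on (wl2 (dir_weight \<alpha>)) (dop \<alpha>)"
  unfolding clinear_on_def
proof (intro ballI allI)
  fix x y a b assume x: "x \<in> wl2 (dir_weight \<alpha>)" and y: "y \<in> wl2 (dir_weight \<alpha>)"
  have "(\<lambda>i. a * x i + b * y i) \<in> wl2 (dir_weight \<alpha>)" by (rule wl2_lin[OF dw_nonneg x y])
  thus "dop \<alpha> (\<lambda>i. a * x i + b * y i) = (\<lambda>j. a * dop \<alpha> x j + b * dop \<alpha> y j)"
    using x y by (simp add: dop_def algebra_simps)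
qed

definition kw :: "real \<Rightarrow> complex \<Rightarrow> nat \<Rightarrow> complex" where
  "kw \<alpha> w = (\<lambda>n. w ^ n / complex_of_real (dir_weight \<alpha> n))"

lemma kw_wl2:
  assumes a: "\<alpha> \<ge> 0" and w: "cmod w < 1"
  shows "kw \<alpha> w \<in> wl2 (dir_weight \<alpha>)"
proof -
  have g: "(\<lambda>n. ((cmod w)\<^sup>2) ^ n) summable_on UNIV"
    using w by (subst summable_on_UNIV_nonneg_real_iff) (auto intro!: summable_geometric simp: abs_square_less_1)
  show ?thesis unfolding wl2_def mem_Collect_eq
  proof (rule summable_on_comparison_test[OF g])
    fix n
    have bp: "dir_weight \<alpha> n > 0" by (rule dw_pos)
    have b1: "dir_weight \<alpha> n \<ge> 1" by (rule dw_ge1[OF a])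
    have "dir_weight \<alpha> n * (cmod (kw \<alpha> w n))\<^sup>2 = ((cmod w)\<^sup>2) ^ n / dir_weight \<alpha> n"
      using bp by (simp add: kw_def norm_divide norm_power power2_eq_square power_mult_distrib field_simps)
    also have "\<dots> \<le> ((cmod w)\<^sup>2) ^ n" using b1 by (simp add: divide_le_eq mult_le_cancel_left1)
    finally show "dir_weight \<alpha> n * (cmod (kw \<alpha> w n))\<^sup>2 \<le> ((cmod w)\<^sup>2) ^ n" .
    show "0 \<le> dir_weight \<alpha> n * (cmod (kw \<alpha> w n))\<^sup>2" by (simp add: dw_nonneg)
  qed
qed

lemma kw_eig:
  assumes a: "\<alpha> \<ge> 0" and w: "cmod w < 1"
  shows "kw \<alpha> w \<in> eig_bundle (dir_weight \<alpha>) (Dstar \<alpha>) w"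
  unfolding eig_bundle_def Dstar_eq[OF a]
proof (intro CollectI conjI kw_wl2[OF a w])
  show "dop \<alpha> (kw \<alpha> w) = (\<lambda>i. w * kw \<alpha> w i)"
  proof
    fix m
    have p1: "dir_weight \<alpha> m \<noteq> 0" "dir_weight \<alpha> (Suc m) \<noteq> 0" using dw_pos[of \<alpha>] by (auto simp: less_imp_neq[symmetric] dw_pos)
    show "dop \<alpha> (kw \<alpha> w) m = w * kw \<alpha> w m"
      using kw_wl2[OF a w] p1 by (simp add: dop_def kw_def field_simps)
  qed
qed

lemma tail_small:
  fixes f :: "nat \<Rightarrow> real"
  assumes s: "f summable_on UNIV" and nn: "\<And>n. f n \<ge> 0" and e: "e > 0"
  shows "\<exists>N. infsum (\<lambda>n. if n < N then 0 else f n) UNIV < e"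
proof -
  obtain F where F: "finite F" "dist (sum f F) (infsum f UNIV) \<le> e/2"
    using infsum_finite_approximation[OF s, of "e/2"] e by auto
  obtain N where N: "\<forall>n\<in>F. n < N" using F(1) finite_nat_set_iff_bounded by blast
  have s1: "(\<lambda>n. if n < N then f n else 0) summable_on UNIV"
    by (rule summable_on_comparison_test[OF s]) (use nn in auto)
  have s2: "(\<lambda>n. if n < N then 0 else f n) summable_on UNIV"
    by (rule summable_on_comparison_test[OF s]) (use nn in auto)
  have "infsum f UNIV = infsum (\<lambda>n. (if n < N then f n else 0) + (if n < N then 0 else f n)) UNIV"
    by (rule infsum_cong) auto
  also have "\<dots> = infsum (\<lambda>n. if n < N then f n else 0) UNIV + infsum (\<lambda>n. if n < N then 0 else f n) UNIV"
    by (rule infsum_add[OF s1 s2])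
  also have "infsum (\<lambda>n. if n < N then f n else 0) UNIV = infsum f {..<N}"
    by (rule infsum_cong_neutral) auto
  also have "\<dots> = sum f {..<N}" by simp
  finally have eq: "infsum (\<lambda>n. if n < N then 0 else f n) UNIV = infsum f UNIV - sum f {..<N}" by simp
  have "sum f F \<le> sum f {..<N}" by (rule sum_mono2) (use N nn in auto)
  moreover have "infsum f UNIV - sum f F \<le> e/2" using F(2) unfolding dist_real_def by (smt (verit))
  ultimately show ?thesis using eq e by (intro exI[of _ N]) linarith
qed

definition dd :: "real \<Rightarrow> nat \<Rightarrow> nat \<Rightarrow> complex" where
  "dd \<alpha> m = (\<lambda>n. complex_of_real (1 / dir_weight \<alpha> m) * delta m n)"

lemma dd_wl2: "dd \<alpha> m \<in> wl2 (dir_weight \<alpha>)"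
  unfolding dd_def by (rule wl2_scale[OF dw_nonneg delta_wl2])

lemma geo4:
  "((\<lambda>n. (1/4::real) ^ n) has_sum 4/3) UNIV"
proof -
  have "(\<lambda>n. (1/4::real) ^ n) sums (1 / (1 - 1/4))" by (rule geometric_sums) simp
  hence "(\<lambda>n. (1/4::real) ^ n) sums (4/3)" by simp
  thus ?thesis by (rule sums_nonneg_imp_has_sum) simp
qed

lemma pow_bound:
  fixes r :: real
  assumes r0: "0 \<le> r" and r1: "r \<le> 1/2" and mn: "m < n"
  shows "(r\<^sup>2) ^ (n - m) \<le> r\<^sup>2 * 4 ^ (m+1) * (1/4) ^ n"
proof -
  obtain k where n: "n = m + 1 + k" using mn by (metis add_Suc less_imp_Suc_add add.commute add_Suc_right Suc_eq_plus1)
  have "(r\<^sup>2) ^ (n - m) = r\<^sup>2 * (r\<^sup>2) ^ k" using n by simp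
  also have "\<dots> \<le> r\<^sup>2 * (1/4) ^ k"
  proof (rule mult_left_mono)
    have "r\<^sup>2 \<le> (1/2)\<^sup>2" by (rule power_mono[OF r1 r0])
    thus "(r\<^sup>2) ^ k \<le> (1/4) ^ k" by (intro power_mono) (auto simp: power2_eq_square)
  qed simp
  also have "(1/4::real) ^ k = 4 ^ (m+1) * (1/4) ^ n"
    using n by (simp add: power_add power_one_over)
  finally show ?thesis by simp
qed

lemma dd_in_cs:
  assumes a: "\<alpha> \<ge> 0"
  shows "dd \<alpha> m \<in> closed_span (dir_weight \<alpha>) (\<Union>w\<in>ball 0 1. eig_bundle (dir_weight \<alpha>) (Dstar \<alpha>) w)"
proof (induction m rule: less_induct)
  case (less m)
  define \<beta> where "\<beta> = dir_weight \<alpha>"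
  define S where "S = (\<Union>w\<in>ball 0 1. eig_bundle (dir_weight \<alpha>) (Dstar \<alpha>) w)"
  have bp: "\<And>n. \<beta> n > 0" by (simp add: \<beta>_def dw_pos)
  have b0: "\<And>n. \<beta> n \<ge> 0" by (simp add: \<beta>_def dw_nonneg)
  have b1: "\<And>n. \<beta> n \<ge> 1" by (simp add: \<beta>_def dw_ge1[OF a])
  have S: "S \<subseteq> wl2 \<beta>" by (auto simp: S_def eig_bundle_def \<beta>_def)
  have IH: "\<And>i. i < m \<Longrightarrow> dd \<alpha> i \<in> closed_span \<beta> S" using less by (simp add: S_def \<beta>_def)
  have kwS: "\<And>r::real. 0 \<le> r \<Longrightarrow> r < 1 \<Longrightarrow> kw \<alpha> (complex_of_real r) \<in> closed_span \<beta> S"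
  proof -
    fix r :: real assume "0 \<le> r" "r < 1"
    hence "kw \<alpha> (complex_of_real r) \<in> S"
      using kw_eig[OF a, of "complex_of_real r"] by (auto simp: S_def)
    thus "kw \<alpha> (complex_of_real r) \<in> closed_span \<beta> S"
      using cspan_cs[OF b0 S] cspan_base by blast
  qed
  have "dd \<alpha> m \<in> closed_span \<beta> S"
  proof (rule cs_closed[OF b0 S dd_wl2[of \<alpha> m, folded \<beta>_def]])
    fix e :: real assume e: "e > 0"
    define r where "r = min (1/2) (e / (4 * 4 ^ (m+1)))"
    have r0: "r > 0" using e by (simp add: r_def)
    have r1: "r \<le> 1/2" unfolding r_def by (rule min.cobounded1)
    have r2: "r \<le> e / (4 * 4 ^ (m+1))" unfolding r_def by (rule min.cobounded2)
    define c :: complex where "c = 1 / complex_of_real r ^ m"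
    define P where "P = (\<lambda>n. \<Sum>i<m. complex_of_real r ^ i * dd \<alpha> i n)"
    define g where "g = (\<lambda>n. c * kw \<alpha> (complex_of_real r) n + (- c) * P n)"
    have P: "P \<in> closed_span \<beta> S" unfolding P_def by (rule cs_sum[OF b0 S IH])
    have g: "g \<in> closed_span \<beta> S" unfolding g_def
      by (rule cs_lin[OF b0 S kwS P]) (use r0 r1 in auto)
    have Pn: "P n = (if n < m then complex_of_real r ^ n / complex_of_real (\<beta> n) else 0)" for n
    proof -
      have "P n = (\<Sum>i<m. if n = i then complex_of_real r ^ i / complex_of_real (\<beta> i) else 0)"
        unfolding P_def by (rule sum.cong) (auto simp: dd_def delta_def \<beta>_def)
      also have "\<dots> = (if n < m then complex_of_real r ^ n / complex_of_real (\<beta> n) else 0)"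
        by (subst sum.delta') auto
      finally show ?thesis .
    qed
    have rm: "c * complex_of_real r ^ m = 1" using r0 by (simp add: c_def)
    have gd: "g n - dd \<alpha> m n = (if m < n then complex_of_real (r ^ (n - m) / \<beta> n) else 0)" for n
    proof (cases "n < m")
      case True thus ?thesis by (simp add: g_def Pn kw_def dd_def delta_def \<beta>_def)
    next
      case False
      hence P0: "P n = 0" by (simp add: Pn)
      show ?thesis
      proof (cases "n = m")
        case True
        have "c * (complex_of_real r ^ m / complex_of_real (\<beta> m)) = 1 / complex_of_real (\<beta> m)"
          using rm by (simp add: field_simps)
        thus ?thesis using True P0 by (simp add: g_def kw_def dd_def delta_def \<beta>_def)
      next
        case nm: False
        hence mn: "m < n" using False by simp
        have "complex_of_real r ^ n = complex_of_real r ^ m * complex_of_real r ^ (n - m)"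
          using mn by (simp flip: power_add)
        hence "c * (complex_of_real r ^ n / complex_of_real (\<beta> n)) = complex_of_real r ^ (n - m) / complex_of_real (\<beta> n)"
          using rm by (simp add: field_simps)
        thus ?thesis using mn P0 by (simp add: g_def kw_def dd_def delta_def \<beta>_def)
      qed
    qed
    have gw: "g \<in> wl2 \<beta>" using g cs_wl2 by auto
    have dw: "(\<lambda>n. g n - dd \<alpha> m n) \<in> wl2 \<beta>" by (rule wl2_diff[OF b0 gw dd_wl2[of \<alpha> m, folded \<beta>_def]])
    hence sL: "(\<lambda>n. \<beta> n * (cmod (g n - dd \<alpha> m n))\<^sup>2) summable_on UNIV" by (simp add: wl2_def)
    define B where "B = (\<lambda>n. r\<^sup>2 * 4 ^ (m+1) * (1/4::real) ^ n)"
    have hB: "(B has_sum (r\<^sup>2 * 4 ^ (m+1) * (4/3))) UNIV" unfolding B_def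
      by (rule has_sum_cmult_right[OF geo4])
    have pt: "\<beta> n * (cmod (g n - dd \<alpha> m n))\<^sup>2 \<le> B n" for n
    proof (cases "m < n")
      case True
      have "\<beta> n * (cmod (g n - dd \<alpha> m n))\<^sup>2 = \<beta> n * (r ^ (n - m) / \<beta> n)\<^sup>2"
        using True r0 bp[of n] by (simp add: gd norm_divide norm_power)
      also have "\<dots> = (r\<^sup>2) ^ (n - m) / \<beta> n" using bp[of n]
        by (simp add: power2_eq_square power_mult_distrib field_simps flip: power_mult)
      also have "\<dots> \<le> (r\<^sup>2) ^ (n - m)" using b1[of n] by (simp add: divide_le_eq mult_le_cancel_left1)
      also have "\<dots> \<le> B n" unfolding B_def by (rule pow_bound[OF _ r1 True]) (use r0 in simp)
      finally show ?thesis .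
    next
      case False thus ?thesis by (simp add: gd B_def)
    qed
    have "infsum (\<lambda>n. \<beta> n * (cmod (g n - dd \<alpha> m n))\<^sup>2) UNIV \<le> infsum B UNIV"
      by (rule infsum_mono[OF sL]) (use hB pt in \<open>auto simp: has_sum_iff\<close>)
    also have "\<dots> = r\<^sup>2 * 4 ^ (m+1) * (4/3)" using hB by (simp add: has_sum_iff)
    also have "\<dots> \<le> (r * (2 * 4 ^ (m+1)))\<^sup>2"
    proof -
      define X :: real where "X = 4 ^ (m+1)"
      have X1: "X \<ge> 1" unfolding X_def by (rule one_le_power) simp
      have "X * (4/3) \<le> 4 * X" using X1 by simp
      also have "\<dots> \<le> 4 * X * X" using X1 by simp
      finally have "r\<^sup>2 * (X * (4/3)) \<le> r\<^sup>2 * (4 * X * X)" by (rule mult_left_mono) simp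
      thus ?thesis unfolding X_def[symmetric] by (simp add: power2_eq_square ac_simps)
    qed
    finally have "sqrt (infsum (\<lambda>n. \<beta> n * (cmod (g n - dd \<alpha> m n))\<^sup>2) UNIV) \<le> sqrt ((r * (2 * 4 ^ (m+1)))\<^sup>2)"
      by (rule real_sqrt_le_mono)
    hence "wnorm \<beta> (\<lambda>n. g n - dd \<alpha> m n) \<le> r * (2 * 4 ^ (m+1))"
      unfolding wnorm_def using r0 by simp
    also have "\<dots> \<le> e / (4 * 4 ^ (m+1)) * (2 * 4 ^ (m+1))" using r2 by (rule mult_right_mono) simp
    also have "\<dots> = e / 2" by (simp add: field_simps power_add)
    finally have "wnorm \<beta> (\<lambda>n. dd \<alpha> m n - g n) < e" using e by (simp add: wnorm_minus_commute)
    thus "\<exists>y\<in>closed_span \<beta> S. wnorm \<beta> (\<lambda>i. dd \<alpha> m i - y i) < e" using g by blast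
  qed
  thus ?case by (simp add: S_def \<beta>_def)
qed

lemma density:
  assumes a: "\<alpha> \<ge> 0"
  shows "bundle_span (dir_weight \<alpha>) (eig_bundle (dir_weight \<alpha>) (Dstar \<alpha>)) = wl2 (dir_weight \<alpha>)"
proof
  define \<beta> where "\<beta> = dir_weight \<alpha>"
  define S where "S = (\<Union>w\<in>ball 0 1. eig_bundle (dir_weight \<alpha>) (Dstar \<alpha>) w)"
  have b0: "\<And>n. \<beta> n \<ge> 0" by (simp add: \<beta>_def dw_nonneg)
  have bp: "\<And>n. \<beta> n > 0" by (simp add: \<beta>_def dw_pos)
  have S: "S \<subseteq> wl2 \<beta>" by (auto simp: S_def eig_bundle_def \<beta>_def)
  show "bundle_span (dir_weight \<alpha>) (eig_bundle (dir_weight \<alpha>) (Dstar \<alpha>)) \<subseteq> wl2 (dir_weight \<alpha>)"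
    unfolding bundle_span_def by (rule cs_wl2)
  show "wl2 (dir_weight \<alpha>) \<subseteq> bundle_span (dir_weight \<alpha>) (eig_bundle (dir_weight \<alpha>) (Dstar \<alpha>))"
  proof
    fix h assume h: "h \<in> wl2 (dir_weight \<alpha>)"
    have "h \<in> closed_span \<beta> S"
    proof (rule cs_closed[OF b0 S h[folded \<beta>_def]])
      fix e :: real assume e: "e > 0"
      define f where "f = (\<lambda>n. \<beta> n * (cmod (h n))\<^sup>2)"
      have fs: "f summable_on UNIV" using h by (simp add: wl2_def f_def \<beta>_def)
      obtain N where N: "infsum (\<lambda>n. if n < N then 0 else f n) UNIV < e\<^sup>2"
        using tail_small[OF fs _, of "e\<^sup>2"] e b0 by (auto simp: f_def)
      define hN where "hN = (\<lambda>n. \<Sum>i<N. (h i * complex_of_real (\<beta> i)) * dd \<alpha> i n)"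
      have hN: "hN \<in> closed_span \<beta> S" unfolding hN_def
        by (rule cs_sum[OF b0 S]) (use dd_in_cs[OF a] in \<open>simp add: S_def \<beta>_def\<close>)
      have hNn: "hN n = (if n < N then h n else 0)" for n
      proof -
        have "hN n = (\<Sum>i<N. if n = i then h i else 0)"
          unfolding hN_def by (rule sum.cong) (use bp in \<open>auto simp: dd_def delta_def \<beta>_def less_imp_neq[OF dw_pos, symmetric]\<close>)
        also have "\<dots> = (if n < N then h n else 0)" by (subst sum.delta') auto
        finally show ?thesis .
      qed
      have "wnorm \<beta> (\<lambda>n. h n - hN n) = sqrt (infsum (\<lambda>n. if n < N then 0 else f n) UNIV)"
        unfolding wnorm_def f_def by (rule arg_cong[where f=sqrt], rule infsum_cong) (simp add: hNn)
      also have "\<dots> < sqrt (e\<^sup>2)" using N by (rule real_sqrt_less_mono)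
      also have "\<dots> = e" using e by simp
      finally show "\<exists>y\<in>closed_span \<beta> S. wnorm \<beta> (\<lambda>i. h i - y i) < e" using hN by blast
    qed
    thus "h \<in> bundle_span (dir_weight \<alpha>) (eig_bundle (dir_weight \<alpha>) (Dstar \<alpha>))"
      by (simp add: bundle_span_def S_def \<beta>_def)
  qed
qed

lemma lin_apply: "clinear_on M X \<Longrightarrow> x \<in> M \<Longrightarrow> y \<in> M \<Longrightarrow>
    X (\<lambda>i. a * x i + b * y i) = (\<lambda>j. a * X x j + b * X y j)"
  unfolding clinear_on_def by blast

lemma lin_scale: assumes "clinear_on M X" "x \<in> M"
  shows "X (\<lambda>i. a * x i) = (\<lambda>j. a * X x j)"
  using lin_apply[OF assms assms(2), of a 0] by simp

lemma lin_add: assumes "clinear_on M X" "x \<in> M" "y \<in> M"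
  shows "X (\<lambda>i. x i + y i) = (\<lambda>j. X x j + X y j)"
  using lin_apply[OF assms, of 1 1] by simp

lemma lin_diff: assumes "clinear_on M X" "x \<in> M" "y \<in> M"
  shows "X (\<lambda>i. x i - y i) = (\<lambda>j. X x j - X y j)"
  using lin_apply[OF assms, of 1 "-1"] by simp

lemma bound_nonneg:
  assumes "\<exists>C. \<forall>x\<in>M. wnorm \<beta>2 (X x) \<le> C * wnorm \<beta>1 x" and b: "\<And>i. 0 \<le> \<beta>1 i"
  shows "\<exists>C\<ge>0. \<forall>x\<in>M. wnorm \<beta>2 (X x) \<le> C * wnorm \<beta>1 x"
proof -
  obtain C where C: "\<forall>x\<in>M. wnorm \<beta>2 (X x) \<le> C * wnorm \<beta>1 x" using assms by blast
  have "\<forall>x\<in>M. wnorm \<beta>2 (X x) \<le> max C 0 * wnorm \<beta>1 x"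
  proof
    fix x assume "x \<in> M"
    hence "wnorm \<beta>2 (X x) \<le> C * wnorm \<beta>1 x" using C by blast
    also have "\<dots> \<le> max C 0 * wnorm \<beta>1 x" by (rule mult_right_mono) (auto simp: wnorm_nonneg b)
    finally show "wnorm \<beta>2 (X x) \<le> max C 0 * wnorm \<beta>1 x" .
  qed
  thus ?thesis by (intro exI[of _ "max C 0"]) auto
qed

lemma wnorm_diff_le:
  assumes b: "\<And>i. 0 \<le> \<beta> i" and x: "x \<in> wl2 \<beta>" and y: "y \<in> wl2 \<beta>"
  shows "wnorm \<beta> (\<lambda>i. x i - y i) \<le> wnorm \<beta> x + wnorm \<beta> y"
proof -
  have "wnorm \<beta> (\<lambda>i. x i + (-1) * y i) \<le> wnorm \<beta> x + wnorm \<beta> (\<lambda>i. (-1) * y i)"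
    by (rule wnorm_triangle[OF b x wl2_scale[OF b y]])
  moreover have "wnorm \<beta> (\<lambda>i. - y i) = wnorm \<beta> y" unfolding wnorm_def by simp
  ultimately show ?thesis by simp
qed

lemma small_zero:
  assumes "\<And>e. e > 0 \<Longrightarrow> (t::real) \<le> K * e" and "K \<ge> 0" and "t \<ge> 0"
  shows "t = 0"
proof (rule ccontr)
  assume "t \<noteq> 0" hence t: "t > 0" using assms(3) by simp
  have "t \<le> K * (t / (K + 1))" using assms(1)[of "t/(K+1)"] t assms(2) by simp
  also have "\<dots> < t" using t assms(2) by (simp add: field_simps)
  finally show False by simp
qed

lemma winner_self:
  assumes b: "\<And>i. 0 \<le> \<beta> i" and x: "x \<in> wl2 \<beta>"
  shows "winner \<beta> x x = complex_of_real ((wnorm \<beta> x)\<^sup>2)"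
proof -
  define f where "f = (\<lambda>i. \<beta> i * (cmod (x i))\<^sup>2)"
  have s: "f summable_on UNIV" using x by (simp add: wl2_def f_def)
  have "(f has_sum infsum f UNIV) UNIV" using s by (simp add: summable_iff_has_sum_infsum)
  hence h: "((\<lambda>i. complex_of_real (f i)) has_sum complex_of_real (infsum f UNIV)) UNIV"
    by (rule has_sum_of_real)
  have "winner \<beta> x x = infsum (\<lambda>i. complex_of_real (f i)) UNIV"
    unfolding winner_def f_def
  proof (rule infsum_cong)
    fix i
    have "x i * cnj (x i) = complex_of_real ((cmod (x i))\<^sup>2)" by (rule complex_norm_square[symmetric])
    thus "complex_of_real (\<beta> i) * x i * cnj (x i) = complex_of_real (\<beta> i * (cmod (x i))\<^sup>2)"
      by (simp only: mult.assoc of_real_mult)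
  qed
  also have "\<dots> = complex_of_real (infsum f UNIV)" using h by (simp add: infsumI)
  also have "infsum f UNIV = (wnorm \<beta> x)\<^sup>2"
    unfolding wnorm_def f_def by (simp add: infsum_nonneg b)
  finally show ?thesis .
qed

lemma unitary_norm:
  assumes U: "unitary_between \<beta>1 M \<beta>2 N U" and b1: "\<And>i. 0 \<le> \<beta>1 i" and b2: "\<And>i. 0 \<le> \<beta>2 i"
    and M: "M \<subseteq> wl2 \<beta>1" and N: "N \<subseteq> wl2 \<beta>2" and x: "x \<in> M"
  shows "wnorm \<beta>2 (U x) = wnorm \<beta>1 x"
proof -
  have Ux: "U x \<in> N" using U x unfolding unitary_between_def bij_betw_def by blast
  have xw: "x \<in> wl2 \<beta>1" using M x by blast
  have Uxw: "U x \<in> wl2 \<beta>2" using N Ux by blast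
  have "winner \<beta>2 (U x) (U x) = winner \<beta>1 x x" using U x unfolding unitary_between_def by blast
  hence "complex_of_real ((wnorm \<beta>2 (U x))\<^sup>2) = complex_of_real ((wnorm \<beta>1 x)\<^sup>2)"
    by (simp only: winner_self[of \<beta>2 "U x", OF b2 Uxw] winner_self[of \<beta>1 x, OF b1 xw])
  hence "(wnorm \<beta>2 (U x))\<^sup>2 = (wnorm \<beta>1 x)\<^sup>2" using of_real_eq_iff by blast
  thus ?thesis using wnorm_nonneg[of \<beta>1, OF b1] wnorm_nonneg[of \<beta>2, OF b2] by (simp add: power2_eq_iff_nonneg)
qed

lemma tens_wl2:
  assumes b1: "\<And>i. 0 \<le> \<beta>1 i" and b2: "\<And>i. 0 \<le> \<beta>2 i"
    and x: "x \<in> wl2 \<beta>1" and y: "y \<in> wl2 \<beta>2"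
  shows "tens x y \<in> wl2 (tensor_weight \<beta>1 \<beta>2)"
proof -
  define a where "a = (\<lambda>i. \<beta>1 i * (cmod (x i))\<^sup>2)"
  define c where "c = (\<lambda>j. \<beta>2 j * (cmod (y j))\<^sup>2)"
  have a: "a summable_on UNIV" using x by (simp add: wl2_def a_def)
  have c: "c summable_on UNIV" using y by (simp add: wl2_def c_def)
  have a0: "\<And>i. a i \<ge> 0" using b1 by (simp add: a_def)
  have c0: "\<And>j. c j \<ge> 0" using b2 by (simp add: c_def)
  define f where "f = (\<lambda>(i,j). a i * c j)"
  have "f summable_on UNIV"
  proof (rule nonneg_bdd_above_summable_on)
    show "\<And>p. p \<in> UNIV \<Longrightarrow> 0 \<le> f p" using a0 c0 by (auto simp: f_def)
    show "bdd_above (sum f ` {F. F \<subseteq> UNIV \<and> finite F})"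
    proof (rule bdd_aboveI2)
      fix F :: "('a \<times> 'b) set" assume "F \<in> {F. F \<subseteq> UNIV \<and> finite F}"
      hence F: "finite F" by simp
      have "sum f F \<le> sum f (fst ` F \<times> snd ` F)"
        by (rule sum_mono2) (use F a0 c0 in \<open>auto simp: f_def intro: rev_image_eqI\<close>)
      also have "\<dots> = (\<Sum>i\<in>fst ` F. \<Sum>j\<in>snd ` F. a i * c j)"
        unfolding f_def by (rule sum.cartesian_product[symmetric])
      also have "\<dots> = (\<Sum>i\<in>fst ` F. a i) * (\<Sum>j\<in>snd ` F. c j)"
        by (simp add: sum_product)
      also have "\<dots> \<le> infsum a UNIV * infsum c UNIV"
        by (intro mult_mono finite_sum_le_infsum a c sum_nonneg infsum_nonneg) (use F a0 c0 in auto)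
      finally show "sum f F \<le> infsum a UNIV * infsum c UNIV" .
    qed
  qed
  moreover have "f = (\<lambda>ij. tensor_weight \<beta>1 \<beta>2 ij * (cmod (tens x y ij))\<^sup>2)"
    by (auto simp: f_def a_def c_def tensor_weight_def tens_def norm_mult power_mult_distrib)
  ultimately show ?thesis by (simp add: wl2_def)
qed

lemma lin_zero: assumes "clinear_on M X" "(\<lambda>_. 0) \<in> M"
  shows "X (\<lambda>_. 0) = (\<lambda>_. 0)"
  using lin_scale[OF assms, of 0] by simp

lemma intertwine:
  fixes Z :: "('i \<Rightarrow> complex) \<Rightarrow> ('j \<Rightarrow> complex)" and D :: "('i \<Rightarrow> complex) \<Rightarrow> ('i \<Rightarrow> complex)"
    and T :: "('j \<Rightarrow> complex) \<Rightarrow> ('j \<Rightarrow> complex)"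
  assumes b1: "\<And>i. 0 < \<beta>1 i" and b2: "\<And>j. 0 < \<beta>2 j"
    and Zl: "clinear_on (wl2 \<beta>1) Z" and Zm: "\<And>x. x \<in> wl2 \<beta>1 \<Longrightarrow> Z x \<in> wl2 \<beta>2"
    and Zb: "\<And>x. x \<in> wl2 \<beta>1 \<Longrightarrow> wnorm \<beta>2 (Z x) \<le> CZ * wnorm \<beta>1 x" and CZ: "CZ \<ge> 0"
    and Dl: "clinear_on (wl2 \<beta>1) D" and Dm: "\<And>x. x \<in> wl2 \<beta>1 \<Longrightarrow> D x \<in> wl2 \<beta>1"
    and Db: "\<And>x. x \<in> wl2 \<beta>1 \<Longrightarrow> wnorm \<beta>1 (D x) \<le> CD * wnorm \<beta>1 x" and CD: "CD \<ge> 0"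
    and Tl: "clinear_on (wl2 \<beta>2) T" and Tm: "\<And>x. x \<in> wl2 \<beta>2 \<Longrightarrow> T x \<in> wl2 \<beta>2"
    and Tb: "\<And>x. x \<in> wl2 \<beta>2 \<Longrightarrow> wnorm \<beta>2 (T x) \<le> CT * wnorm \<beta>2 x" and CT: "CT \<ge> 0"
    and E: "\<And>x. x \<in> S \<Longrightarrow> \<exists>w. x \<in> wl2 \<beta>1 \<and> D x = (\<lambda>i. w * x i) \<and> T (Z x) = (\<lambda>j. w * Z x j)"
    and dense: "closed_span \<beta>1 S = wl2 \<beta>1"
    and x: "x \<in> wl2 \<beta>1"
  shows "Z (D x) = T (Z x)"
proof -
  have b1': "\<And>i. 0 \<le> \<beta>1 i" using b1 less_imp_le by blast
  have b2': "\<And>i. 0 \<le> \<beta>2 i" using b2 less_imp_le by blast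
  define V where "V = {x \<in> wl2 \<beta>1. Z (D x) = T (Z x)}"
  have cV: "cspan S \<subseteq> V"
  proof (rule cspan_sub)
    have z1: "(\<lambda>_. 0) \<in> wl2 \<beta>1" and z2: "(\<lambda>_. 0) \<in> wl2 \<beta>2" by (rule wl2_zero)+
    show "(\<lambda>_. 0) \<in> V" unfolding V_def
      using z1 lin_zero[OF Dl z1] lin_zero[OF Zl z1] lin_zero[OF Tl z2] by simp
  next
    fix x y :: "'i \<Rightarrow> complex" and a b :: complex assume xV: "x \<in> V" and yV: "y \<in> V"
    have xw: "x \<in> wl2 \<beta>1" and yw: "y \<in> wl2 \<beta>1" using xV yV by (auto simp: V_def)
    have "Z (D (\<lambda>i. a * x i + b * y i)) = (\<lambda>j. a * Z (D x) j + b * Z (D y) j)"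
      by (simp add: lin_apply[OF Dl xw yw] lin_apply[OF Zl Dm[OF xw] Dm[OF yw]])
    also have "\<dots> = (\<lambda>j. a * T (Z x) j + b * T (Z y) j)" using xV yV by (simp add: V_def)
    also have "\<dots> = T (Z (\<lambda>i. a * x i + b * y i))"
      by (simp add: lin_apply[OF Zl xw yw] lin_apply[OF Tl Zm[OF xw] Zm[OF yw]])
    finally show "(\<lambda>i. a * x i + b * y i) \<in> V" unfolding V_def using wl2_lin[OF b1' xw yw] by simp
  next
    show "S \<subseteq> V"
    proof
      fix x assume "x \<in> S"
      then obtain w where xw: "x \<in> wl2 \<beta>1" and Dx: "D x = (\<lambda>i. w * x i)" and TZ: "T (Z x) = (\<lambda>j. w * Z x j)"
        using E by blast
      have "Z (D x) = T (Z x)" unfolding Dx TZ by (rule lin_scale[OF Zl xw])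
      thus "x \<in> V" using xw by (simp add: V_def)
    qed
  qed
  define K where "K = CZ * CD + CT * CZ"
  have K: "K \<ge> 0" using CZ CD CT by (simp add: K_def)
  have DZx: "Z (D x) \<in> wl2 \<beta>2" "T (Z x) \<in> wl2 \<beta>2" using Zm Dm Tm x by auto
  have small: "wnorm \<beta>2 (\<lambda>j. Z (D x) j - T (Z x) j) \<le> K * e" if e: "e > 0" for e
  proof -
    have "x \<in> closed_span \<beta>1 S" using dense x by simp
    then obtain y where y: "y \<in> cspan S" and xy: "wnorm \<beta>1 (\<lambda>i. x i - y i) < e"
      unfolding closed_span_def using e by blast
    have yV: "y \<in> V" using cV y by blast
    hence yw: "y \<in> wl2 \<beta>1" and yeq: "Z (D y) = T (Z y)" by (auto simp: V_def)
    define d where "d = (\<lambda>i. x i - y i)"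
    have dw: "d \<in> wl2 \<beta>1" unfolding d_def by (rule wl2_diff[OF b1' x yw])
    have xd: "x = (\<lambda>i. d i + y i)" by (simp add: d_def)
    have e1: "Z (D x) = (\<lambda>j. Z (D d) j + Z (D y) j)"
      unfolding xd by (simp add: lin_add[OF Dl dw yw] lin_add[OF Zl Dm[OF dw] Dm[OF yw]])
    have e2: "T (Z x) = (\<lambda>j. T (Z d) j + T (Z y) j)"
      unfolding xd by (simp add: lin_add[OF Zl dw yw] lin_add[OF Tl Zm[OF dw] Zm[OF yw]])
    have "(\<lambda>j. Z (D x) j - T (Z x) j) = (\<lambda>j. Z (D d) j - T (Z d) j)"
      unfolding e1 e2 yeq by simp
    hence "wnorm \<beta>2 (\<lambda>j. Z (D x) j - T (Z x) j) = wnorm \<beta>2 (\<lambda>j. Z (D d) j - T (Z d) j)" by simp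
    also have "\<dots> \<le> wnorm \<beta>2 (Z (D d)) + wnorm \<beta>2 (T (Z d))"
      by (rule wnorm_diff_le[OF b2' Zm[OF Dm[OF dw]] Tm[OF Zm[OF dw]]])
    also have "\<dots> \<le> CZ * (CD * wnorm \<beta>1 d) + CT * (CZ * wnorm \<beta>1 d)"
    proof (rule add_mono)
      show "wnorm \<beta>2 (Z (D d)) \<le> CZ * (CD * wnorm \<beta>1 d)"
        using order_trans[OF Zb[OF Dm[OF dw]] mult_left_mono[OF Db[OF dw] CZ]] .
      show "wnorm \<beta>2 (T (Z d)) \<le> CT * (CZ * wnorm \<beta>1 d)"
        using order_trans[OF Tb[OF Zm[OF dw]] mult_left_mono[OF Zb[OF dw] CT]] .
    qed
    also have "\<dots> = K * wnorm \<beta>1 d" by (simp add: K_def algebra_simps)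
    also have "\<dots> \<le> K * e" using xy K by (intro mult_left_mono) (auto simp: d_def)
    finally show ?thesis .
  qed
  have "wnorm \<beta>2 (\<lambda>j. Z (D x) j - T (Z x) j) = 0"
    by (rule small_zero[OF small K wnorm_nonneg[of \<beta>2, OF b2']])
  hence z: "(\<lambda>j. Z (D x) j - T (Z x) j) = (\<lambda>_. 0)"
    by (rule wnorm_eq0[OF b2 wl2_diff[OF b2' DZx], rotated])
  show ?thesis
  proof
    fix j
    have "Z (D x) j - T (Z x) j = 0" using fun_cong[OF z, of j] by simp
    thus "Z (D x) j = T (Z x) j" by simp
  qed
qed

theorem proposition4p6:
  fixes \<alpha> :: real
    and T :: "('a::countable \<Rightarrow> complex) \<Rightarrow> ('a \<Rightarrow> complex)"
    and \<gamma> :: "complex \<Rightarrow> ('b::countable \<Rightarrow> complex)"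
  assumes "0 < \<alpha>" and "\<alpha> \<le> 1"
    and "cowen_douglas_1 (ones :: 'a \<Rightarrow> real) T"
    and "hol_frame (ones :: 'b \<Rightarrow> real) \<gamma>"
    and "bundle_unitary_equiv (ones :: 'a \<Rightarrow> real) (eig_bundle ones T)
           (tensor_weight (dir_weight \<alpha>) (ones :: 'b \<Rightarrow> real))
           (tensor_bundle (eig_bundle (dir_weight \<alpha>) (Dstar \<alpha>)) (line_bundle_of \<gamma>))"
  shows "op_similar (ones :: 'a \<Rightarrow> real) T (dir_weight \<alpha>) (Dstar \<alpha>) \<longleftrightarrow>
         bundle_similar (tensor_weight (dir_weight \<alpha>) (ones :: 'b \<Rightarrow> real))
           (tensor_bundle (eig_bundle (dir_weight \<alpha>) (Dstar \<alpha>)) (line_bundle_of \<gamma>))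
           (dir_weight \<alpha>) (eig_bundle (dir_weight \<alpha>) (Dstar \<alpha>))"
proof -
  let ?b = "dir_weight \<alpha>"
  let ?E = "eig_bundle ?b (Dstar \<alpha>)"
  let ?Tn = "tensor_bundle ?E (line_bundle_of \<gamma>)"
  let ?tw = "tensor_weight ?b (ones :: 'b \<Rightarrow> real)"
  let ?N = "bundle_span ?tw ?Tn"
  let ?ET = "eig_bundle (ones :: 'a \<Rightarrow> real) T"
  let ?oa = "ones :: 'a \<Rightarrow> real"
  have a0: "\<alpha> \<ge> 0" using assms(1) by simp
  have Deq: "Dstar \<alpha> = dop \<alpha>" by (rule Dstar_eq[OF a0])
  have dens: "bundle_span ?b ?E = wl2 ?b" by (rule density[OF a0])
  have bp: "\<And>n. 0 < ?b n" by (rule dw_pos)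
  have b0: "\<And>n. 0 \<le> ?b n" by (rule dw_nonneg)
  have op: "\<And>i. 0 < ?oa i" by (simp add: ones_def)
  have o0: "\<And>i. 0 \<le> ?oa i" by (simp add: ones_def)
  have ob0: "\<And>i. 0 \<le> (ones :: 'b \<Rightarrow> real) i" by (simp add: ones_def)
  have tw0: "\<And>p. 0 \<le> ?tw p" by (auto simp: tensor_weight_def ones_def dw_nonneg)
  have CDa: "cowen_douglas_1 ?oa T" by (rule assms(3))
  have Tl: "clinear_on (wl2 ?oa) T" and Tm: "\<And>y. y \<in> wl2 ?oa \<Longrightarrow> T y \<in> wl2 ?oa"
    and Tb: "\<exists>C. \<forall>y\<in>wl2 ?oa. wnorm ?oa (T y) \<le> C * wnorm ?oa y"
    and ETspan: "bundle_span ?oa ?ET = wl2 ?oa"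
    using CDa unfolding cowen_douglas_1_def bounded_operator_def bounded_op_between_def by blast+
  obtain U where U0: "unitary_between ?tw ?N ?oa (bundle_span ?oa ?ET) U"
    and fibU: "\<forall>w\<in>ball 0 1. U ` ?Tn w = ?ET w"
    using assms(5) unfolding bundle_unitary_equiv_def by blast
  have U: "unitary_between ?tw ?N ?oa (wl2 ?oa) U" using U0 ETspan by simp
  have Ul: "clinear_on ?N U" and Ubij: "bij_betw U ?N (wl2 ?oa)"
    using U unfolding unitary_between_def by blast+
  have Uinj: "inj_on U ?N" using Ubij by (simp add: bij_betw_def)
  have Uim: "U ` ?N = wl2 ?oa" using Ubij by (simp add: bij_betw_def)
  have gen: "(\<Union>w\<in>ball 0 1. ?Tn w) \<subseteq> wl2 ?tw"
  proof (intro UN_least)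
    fix w :: complex assume w: "w \<in> ball 0 1"
    have gw: "\<gamma> w \<in> wl2 (ones :: 'b \<Rightarrow> real)" using assms(4) w unfolding hol_frame_def by blast
    have lw: "line_bundle_of \<gamma> w \<subseteq> wl2 (ones :: 'b \<Rightarrow> real)"
      unfolding line_bundle_of_def by (rule cspan_wl2[OF ob0]) (use gw in auto)
    show "?Tn w \<subseteq> wl2 ?tw" unfolding tensor_bundle_def
    proof (rule cspan_wl2[OF tw0])
      show "{tens x y |x y. x \<in> ?E w \<and> y \<in> line_bundle_of \<gamma> w} \<subseteq> wl2 ?tw"
      proof
        fix z assume "z \<in> {tens x y |x y. x \<in> ?E w \<and> y \<in> line_bundle_of \<gamma> w}"
        then obtain x y where z: "z = tens x y" and x: "x \<in> ?E w" and y: "y \<in> line_bundle_of \<gamma> w" by blast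
        have xw: "x \<in> wl2 ?b" using x by (simp add: eig_bundle_def)
        have yw: "y \<in> wl2 (ones :: 'b \<Rightarrow> real)" using y lw by blast
        show "z \<in> wl2 ?tw" unfolding z by (rule tens_wl2[OF b0 ob0 xw yw])
      qed
    qed
  qed
  have Nw: "?N \<subseteq> wl2 ?tw" unfolding bundle_span_def by (rule cs_wl2)
  have TnN: "\<And>w. w \<in> ball 0 1 \<Longrightarrow> ?Tn w \<subseteq> ?N"
  proof
    fix w z assume w: "w \<in> ball 0 1" and z: "z \<in> ?Tn w"
    have "z \<in> cspan (\<Union>w\<in>ball 0 1. ?Tn w)" by (rule cspan_base) (use w z in blast)
    thus "z \<in> ?N" unfolding bundle_span_def using cspan_cs[OF tw0 gen] by blast
  qed
  have Nlin: "\<And>x y a b. x \<in> ?N \<Longrightarrow> y \<in> ?N \<Longrightarrow> (\<lambda>i. a * x i + b * y i) \<in> ?N"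
    unfolding bundle_span_def by (rule cs_lin[OF tw0 gen])
  have Unorm: "\<And>x. x \<in> ?N \<Longrightarrow> wnorm ?oa (U x) = wnorm ?tw x"
    by (rule unitary_norm[OF U tw0 o0 Nw]) auto
  have Vin: "\<And>p. p \<in> wl2 ?oa \<Longrightarrow> inv_into ?N U p \<in> ?N"
    using Uim by (metis inv_into_into)
  have UV: "\<And>p. p \<in> wl2 ?oa \<Longrightarrow> U (inv_into ?N U p) = p"
    using Uim by (metis f_inv_into_f)
  have Vlin: "inv_into ?N U (\<lambda>i. a * p i + b * q i) = (\<lambda>i. a * inv_into ?N U p i + b * inv_into ?N U q i)"
    if p: "p \<in> wl2 ?oa" and q: "q \<in> wl2 ?oa" for p q a b
  proof (rule inv_into_f_eq[OF Uinj])
    show "(\<lambda>i. a * inv_into ?N U p i + b * inv_into ?N U q i) \<in> ?N" by (rule Nlin[OF Vin[OF p] Vin[OF q]])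
    show "U (\<lambda>i. a * inv_into ?N U p i + b * inv_into ?N U q i) = (\<lambda>i. a * p i + b * q i)"
      by (simp add: lin_apply[OF Ul Vin[OF p] Vin[OF q]] UV[OF p] UV[OF q])
  qed
  have Dl: "clinear_on (wl2 ?b) (Dstar \<alpha>)" unfolding Deq by (rule dop_lin[OF a0])
  have Dm: "\<And>x. x \<in> wl2 ?b \<Longrightarrow> Dstar \<alpha> x \<in> wl2 ?b" unfolding Deq by (rule dop_wl2(1)[OF a0])
  have Db: "\<And>x. x \<in> wl2 ?b \<Longrightarrow> wnorm ?b (Dstar \<alpha> x) \<le> sqrt (2 powr \<alpha>) * wnorm ?b x"
    unfolding Deq by (rule dop_wl2(2)[OF a0])
  show ?thesis
  proof
    assume "op_similar ?oa T ?b (Dstar \<alpha>)"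
    then obtain X where Xi: "invertible_op_between ?b (wl2 ?b) ?oa (wl2 ?oa) X"
      and Xint: "\<forall>x\<in>wl2 ?b. X (Dstar \<alpha> x) = T (X x)"
      unfolding op_similar_def by blast
    have Xl: "clinear_on (wl2 ?b) X" and Xbij: "bij_betw X (wl2 ?b) (wl2 ?oa)"
      and Xb: "\<exists>C. \<forall>x\<in>wl2 ?b. wnorm ?oa (X x) \<le> C * wnorm ?b x"
      and Xib: "\<exists>C. \<forall>x\<in>wl2 ?b. wnorm ?b x \<le> C * wnorm ?oa (X x)"
      using Xi unfolding invertible_op_between_def bounded_op_between_def by blast+
    have Xm: "\<And>x. x \<in> wl2 ?b \<Longrightarrow> X x \<in> wl2 ?oa" using Xbij by (auto simp: bij_betw_def)
    have Xinj: "inj_on X (wl2 ?b)" using Xbij by (simp add: bij_betw_def)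
    have Xfib: "X ` ?E w = ?ET w" if w: "w \<in> ball 0 1" for w
    proof
      show "X ` ?E w \<subseteq> ?ET w"
      proof
        fix y assume "y \<in> X ` ?E w"
        then obtain x where x: "x \<in> ?E w" and y: "y = X x" by blast
        have xw: "x \<in> wl2 ?b" and Dx: "Dstar \<alpha> x = (\<lambda>i. w * x i)" using x by (auto simp: eig_bundle_def)
        have "T (X x) = X (Dstar \<alpha> x)" using Xint xw by simp
        also have "\<dots> = (\<lambda>j. w * X x j)" unfolding Dx by (rule lin_scale[OF Xl xw])
        finally show "y \<in> ?ET w" using y Xm[OF xw] by (simp add: eig_bundle_def)
      qed
      show "?ET w \<subseteq> X ` ?E w"
      proof
        fix y assume y: "y \<in> ?ET w"
        have yw: "y \<in> wl2 ?oa" and Ty: "T y = (\<lambda>i. w * y i)" using y by (auto simp: eig_bundle_def)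
        obtain x where xw: "x \<in> wl2 ?b" and yx: "y = X x" using yw Xbij by (auto simp: bij_betw_def)
        have "X (Dstar \<alpha> x) = X (\<lambda>i. w * x i)"
        proof -
          have "X (Dstar \<alpha> x) = T y" using Xint xw yx by simp
          also have "\<dots> = (\<lambda>j. w * X x j)" using Ty yx by simp
          also have "\<dots> = X (\<lambda>i. w * x i)" by (rule lin_scale[OF Xl xw, symmetric])
          finally show ?thesis .
        qed
        hence "Dstar \<alpha> x = (\<lambda>i. w * x i)"
          by (rule inj_onD[OF Xinj]) (use Dm[OF xw] wl2_scale[OF b0 xw] in auto)
        hence "x \<in> ?E w" using xw by (simp add: eig_bundle_def)
        thus "y \<in> X ` ?E w" using yx by blast
      qed
    qed
    define Y where "Y = (\<lambda>x. inv_into ?N U (X x))"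
    have YN: "\<And>x. x \<in> wl2 ?b \<Longrightarrow> Y x \<in> ?N" unfolding Y_def using Vin Xm by blast
    have UY: "\<And>x. x \<in> wl2 ?b \<Longrightarrow> U (Y x) = X x" unfolding Y_def using UV Xm by blast
    have nY: "\<And>x. x \<in> wl2 ?b \<Longrightarrow> wnorm ?tw (Y x) = wnorm ?oa (X x)"
      using Unorm[OF YN] UY by metis
    have "invertible_op_between ?b (bundle_span ?b ?E) ?tw ?N Y"
      unfolding dens invertible_op_between_def bounded_op_between_def
    proof (intro conjI)
      show "clinear_on (wl2 ?b) Y" unfolding clinear_on_def
      proof (intro ballI allI)
        fix x y a b assume x: "x \<in> wl2 ?b" and y: "y \<in> wl2 ?b"
        show "Y (\<lambda>i. a * x i + b * y i) = (\<lambda>j. a * Y x j + b * Y y j)"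
          unfolding Y_def lin_apply[OF Xl x y] by (rule Vlin[OF Xm[OF x] Xm[OF y]])
      qed
      show "Y ` wl2 ?b \<subseteq> ?N" using YN by blast
      show "\<exists>C. \<forall>x\<in>wl2 ?b. wnorm ?tw (Y x) \<le> C * wnorm ?b x" using Xb nY by simp
      show "bij_betw Y (wl2 ?b) ?N"
        using bij_betw_trans[OF Xbij bij_betw_inv_into[OF Ubij]] by (simp add: Y_def o_def)
      show "\<exists>C. \<forall>x\<in>wl2 ?b. wnorm ?b x \<le> C * wnorm ?tw (Y x)" using Xib nY by simp
    qed
    moreover have "\<forall>w\<in>ball 0 1. Y ` ?E w = ?Tn w"
    proof
      fix w :: complex assume w: "w \<in> ball 0 1"
      have "Y ` ?E w = inv_into ?N U ` (X ` ?E w)" by (simp add: Y_def image_image)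
      also have "\<dots> = inv_into ?N U ` (U ` ?Tn w)" using Xfib[OF w] fibU w by simp
      also have "\<dots> = ?Tn w" by (rule inv_into_image_cancel[OF Uinj TnN[OF w]])
      finally show "Y ` ?E w = ?Tn w" .
    qed
    ultimately show "bundle_similar ?tw ?Tn ?b ?E"
      unfolding bundle_similar_def by blast
  next
    assume "bundle_similar ?tw ?Tn ?b ?E"
    then obtain Y where Yi: "invertible_op_between ?b (bundle_span ?b ?E) ?tw ?N Y"
      and fibY: "\<forall>w\<in>ball 0 1. Y ` ?E w = ?Tn w"
      unfolding bundle_similar_def by blast
    have Yl: "clinear_on (wl2 ?b) Y" and Ybij: "bij_betw Y (wl2 ?b) ?N"
      and Yb: "\<exists>C. \<forall>x\<in>wl2 ?b. wnorm ?tw (Y x) \<le> C * wnorm ?b x"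
      and Yib: "\<exists>C. \<forall>x\<in>wl2 ?b. wnorm ?b x \<le> C * wnorm ?tw (Y x)"
      using Yi unfolding dens invertible_op_between_def bounded_op_between_def by blast+
    have YN: "\<And>x. x \<in> wl2 ?b \<Longrightarrow> Y x \<in> ?N" using Ybij by (auto simp: bij_betw_def)
    define Z where "Z = (\<lambda>x. U (Y x))"
    have nZ: "\<And>x. x \<in> wl2 ?b \<Longrightarrow> wnorm ?oa (Z x) = wnorm ?tw (Y x)"
      unfolding Z_def by (rule Unorm[OF YN])
    have Zbij: "bij_betw Z (wl2 ?b) (wl2 ?oa)"
      using bij_betw_trans[OF Ybij Ubij] by (simp add: Z_def o_def)
    have Zm: "\<And>x. x \<in> wl2 ?b \<Longrightarrow> Z x \<in> wl2 ?oa" using Zbij by (auto simp: bij_betw_def)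
    have Zl: "clinear_on (wl2 ?b) Z" unfolding clinear_on_def
    proof (intro ballI allI)
      fix x y a b assume x: "x \<in> wl2 ?b" and y: "y \<in> wl2 ?b"
      show "Z (\<lambda>i. a * x i + b * y i) = (\<lambda>j. a * Z x j + b * Z y j)"
        unfolding Z_def lin_apply[OF Yl x y] by (rule lin_apply[OF Ul YN[OF x] YN[OF y]])
    qed
    have Zb: "\<exists>C. \<forall>x\<in>wl2 ?b. wnorm ?oa (Z x) \<le> C * wnorm ?b x" using Yb nZ by simp
    have Zib: "\<exists>C. \<forall>x\<in>wl2 ?b. wnorm ?b x \<le> C * wnorm ?oa (Z x)" using Yib nZ by simp
    have Zfib: "\<And>w. w \<in> ball 0 1 \<Longrightarrow> Z ` ?E w = ?ET w"
    proof -
      fix w :: complex assume w: "w \<in> ball 0 1"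
      have "Z ` ?E w = U ` (Y ` ?E w)" by (simp add: Z_def image_image)
      also have "\<dots> = ?ET w" using fibY fibU w by simp
      finally show "Z ` ?E w = ?ET w" .
    qed
    obtain CZ where CZ: "CZ \<ge> 0" "\<forall>x\<in>wl2 ?b. wnorm ?oa (Z x) \<le> CZ * wnorm ?b x"
      using bound_nonneg[OF Zb b0] by blast
    obtain CT where CT: "CT \<ge> 0" "\<forall>x\<in>wl2 ?oa. wnorm ?oa (T x) \<le> CT * wnorm ?oa x"
      using bound_nonneg[OF Tb o0] by blast
    have dense': "closed_span ?b (\<Union>w\<in>ball 0 1. ?E w) = wl2 ?b"
      using dens by (simp add: bundle_span_def)
    have Zint: "Z (Dstar \<alpha> x) = T (Z x)" if x: "x \<in> wl2 ?b" for x
    proof (rule intertwine[OF bp op Zl Zm _ CZ(1) Dl Dm Db _ Tl Tm _ CT(1) _ dense' x])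
      show "\<And>x. x \<in> wl2 ?b \<Longrightarrow> wnorm ?oa (Z x) \<le> CZ * wnorm ?b x" using CZ(2) by blast
      show "\<And>x. x \<in> wl2 ?oa \<Longrightarrow> wnorm ?oa (T x) \<le> CT * wnorm ?oa x" using CT(2) by blast
      show "0 \<le> sqrt (2 powr \<alpha>)" by simp
      fix v assume "v \<in> (\<Union>w\<in>ball 0 1. ?E w)"
      then obtain w where w: "w \<in> ball 0 1" and v: "v \<in> ?E w" by blast
      have vw: "v \<in> wl2 ?b" and Dv: "Dstar \<alpha> v = (\<lambda>i. w * v i)" using v by (auto simp: eig_bundle_def)
      have "Z v \<in> ?ET w" using Zfib[OF w] v by blast
      hence "T (Z v) = (\<lambda>j. w * Z v j)" by (simp add: eig_bundle_def)
      thus "\<exists>w. v \<in> wl2 ?b \<and> Dstar \<alpha> v = (\<lambda>i. w * v i) \<and> T (Z v) = (\<lambda>j. w * Z v j)"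
        using vw Dv by blast
    qed
    have "invertible_op_between ?b (wl2 ?b) ?oa (wl2 ?oa) Z"
      unfolding invertible_op_between_def bounded_op_between_def
      using Zl Zm Zb Zbij Zib by blast
    thus "op_similar ?oa T ?b (Dstar \<alpha>)"
      unfolding op_similar_def using Zint by blast
  qed
qed

end
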